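(* Let $\{\rho_\theta;\theta\in\Theta\}$ be a model as in the context, $g:\Theta\to\mathbb R$, and let $\theta,\theta+\delta\in\Theta$ with $\delta\neq0$, no element of $\Theta$ lying strictly between $\theta$ and $\theta+\delta$, and $g(\theta)\ne g(\theta+\delta)$. Let $(M_n)_{n\ge1}$ be a sequence of estimators, $M_n$ a POVM on $\mathcal H^{\otimes n}$, and suppose there is $n_0$ such that for all $n\ge n_0$ \[ \frac{|b(M_n,\theta)|}{|\delta|}\le\frac{|\Delta^1_\delta g(\theta)|}{3}\quad\text{and}\quad \frac{|b(M_n,\theta+\delta)|}{|\delta|}\le\frac{|\Delta^1_\delta g(\theta)|}{3}. \] Then \[ \liminf_{n\to\infty}\frac1n\log V_\theta(M_n)\ge-\log\big(1+\delta^2J^{R,1}_{\theta,\delta}\big), \] where $J^{R,1}_{\theta,\delta}=\mathrm{Tr}(\rho_\theta L^{R,1}_{\theta,\delta}(L^{R,1}_{\theta,\delta})^\dagger)$ with $L^{R,1}_{\theta,\delta}=\rho_\theta^{-1}(\rho_{\theta+\delta}-\rho_\theta)/\delta$.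
   Context: $\mathcal H$ is a finite-dimensional complex Hilbert space; $\Theta\subset\mathbb R$; $\rho_\theta$ are density operators on $\mathcal H$ with $\rho_\theta>0$. $\Delta^1_\delta f(\theta)=(f(\theta+\delta)-f(\theta))/\delta$. For an estimator $M_n$ (POVM on the Borel sets of $\mathbb R$ acting on $\mathcal H^{\otimes n}$), $b(M_n,\theta')=\int(\gamma-g(\theta'))\mathrm{Tr}(\rho_{\theta'}^{\otimes n}M_n(d\gamma))$ and $V_{\theta'}(M_n)=\int(\gamma-g(\theta'))^2\mathrm{Tr}(\rho_{\theta'}^{\otimes n}M_n(d\gamma))$. *)

theory Defs
  imports "HOL-Probability.Probability" "Jordan_Normal_Form.Schur_Decomposition"
begin

text \<open>Operators on the d-dimensional Hilbert space C^d are d x d complex matrices.\<close>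

definition mtrace :: "complex mat \<Rightarrow> complex" where
  "mtrace A = (\<Sum>i<dim_row A. A $$ (i, i))"

definition qform :: "complex mat \<Rightarrow> complex vec \<Rightarrow> complex" where
  "qform A v = scalar_prod (conjugate v) (mult_mat_vec A v)"

definition psd_op :: "nat \<Rightarrow> complex mat \<Rightarrow> bool" where
  "psd_op n A \<longleftrightarrow> A \<in> carrier_mat n n \<and>
     (\<forall>v \<in> carrier_vec n. Im (qform A v) = 0 \<and> Re (qform A v) \<ge> 0)"

definition pd_op :: "nat \<Rightarrow> complex mat \<Rightarrow> bool" where
  "pd_op n A \<longleftrightarrow> psd_op n A \<and>
     (\<forall>v \<in> carrier_vec n. v \<noteq> 0\<^sub>v n \<longrightarrow> Re (qform A v) > 0)"

definition density_op :: "nat \<Rightarrow> complex mat \<Rightarrow> bool" where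
  "density_op n \<rho> \<longleftrightarrow> psd_op n \<rho> \<and> mtrace \<rho> = 1"

definition minv :: "complex mat \<Rightarrow> complex mat" where
  "minv A = (SOME B. B \<in> carrier_mat (dim_row A) (dim_row A) \<and>
                 A * B = 1\<^sub>m (dim_row A) \<and> B * A = 1\<^sub>m (dim_row A))"

definition kron :: "complex mat \<Rightarrow> complex mat \<Rightarrow> complex mat" where
  "kron A B = mat (dim_row A * dim_row B) (dim_col A * dim_col B)
     (\<lambda>(i, j). A $$ (i div dim_row B, j div dim_col B) * B $$ (i mod dim_row B, j mod dim_col B))"

fun tensor_pow :: "complex mat \<Rightarrow> nat \<Rightarrow> complex mat" where
  "tensor_pow A 0 = 1\<^sub>m 1"
| "tensor_pow A (Suc n) = kron (tensor_pow A n) A"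

text \<open>POVM on the Borel sets of the real line acting on C^N
  (countable additivity in the (finite-dimensional) entrywise topology).\<close>
definition is_povm :: "nat \<Rightarrow> (real set \<Rightarrow> complex mat) \<Rightarrow> bool" where
  "is_povm N M \<longleftrightarrow>
     (\<forall>A \<in> sets borel. psd_op N (M A)) \<and>
     M UNIV = 1\<^sub>m N \<and>
     (\<forall>F :: nat \<Rightarrow> real set. range F \<subseteq> sets borel \<longrightarrow> disjoint_family F \<longrightarrow>
        (\<forall>i < N. \<forall>j < N. (\<lambda>n. (\<Sum>k<n. M (F k) $$ (i, j))) \<longlonglongrightarrow> M (\<Union>k. F k) $$ (i, j)))"

definition outcome_dist :: "complex mat \<Rightarrow> (real set \<Rightarrow> complex mat) \<Rightarrow> real measure" where
  "outcome_dist \<sigma> M = measure_of UNIV (sets borel) (\<lambda>A. ennreal (Re (mtrace (\<sigma> * M A))))"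

definition bias :: "(real \<Rightarrow> complex mat) \<Rightarrow> (real \<Rightarrow> real) \<Rightarrow> nat \<Rightarrow> (real set \<Rightarrow> complex mat) \<Rightarrow> real \<Rightarrow> real" where
  "bias \<rho> g n M \<theta>' = (\<integral>\<gamma>. (\<gamma> - g \<theta>') \<partial>(outcome_dist (tensor_pow (\<rho> \<theta>') n) M))"

definition mse :: "(real \<Rightarrow> complex mat) \<Rightarrow> (real \<Rightarrow> real) \<Rightarrow> nat \<Rightarrow> (real set \<Rightarrow> complex mat) \<Rightarrow> real \<Rightarrow> ennreal" where
  "mse \<rho> g n M \<theta>' = (\<integral>\<^sup>+\<gamma>. ennreal ((\<gamma> - g \<theta>')\<^sup>2) \<partial>(outcome_dist (tensor_pow (\<rho> \<theta>') n) M))"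

definition ln_ennreal :: "ennreal \<Rightarrow> ereal" where
  "ln_ennreal x = (if x = 0 then -\<infinity> else if x = \<top> then \<infinity> else ereal (ln (enn2real x)))"

definition diff1 :: "(real \<Rightarrow> real) \<Rightarrow> real \<Rightarrow> real \<Rightarrow> real" where
  "diff1 f \<delta> \<theta> = (f (\<theta> + \<delta>) - f \<theta>) / \<delta>"

definition LR1 :: "(real \<Rightarrow> complex mat) \<Rightarrow> real \<Rightarrow> real \<Rightarrow> complex mat" where
  "LR1 \<rho> \<theta> \<delta> = (complex_of_real (1 / \<delta>)) \<cdot>\<^sub>m (minv (\<rho> \<theta>) * (\<rho> (\<theta> + \<delta>) - \<rho> \<theta>))"

definition JR1 :: "(real \<Rightarrow> complex mat) \<Rightarrow> real \<Rightarrow> real \<Rightarrow> complex" where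
  "JR1 \<rho> \<theta> \<delta> = mtrace (\<rho> \<theta> * LR1 \<rho> \<theta> \<delta> * mat_adjoint (LR1 \<rho> \<theta> \<delta>))"

end

theory Submission
  imports Defs
begin


type_synonym cmat = "complex mat"

lemma mult_entry:
  assumes "i < dim_row A" "j < dim_col B" "dim_col A = dim_row B"
  shows "(A * B) $$ (i,j) = (\<Sum>k<dim_col A. A $$ (i,k) * B $$ (k,j))"
  using assms by (auto simp: scalar_prod_def atLeast0LessThan intro!: sum.cong)

lemma adj_dims[simp]: fixes A :: cmat shows "dim_row (mat_adjoint A) = dim_col A" "dim_col (mat_adjoint A) = dim_row A"
  by (simp_all add: mat_adjoint_def mat_of_rows_def)

lemma adj_carrier[simp]: fixes A :: cmat shows "A \<in> carrier_mat n m \<Longrightarrow> mat_adjoint A \<in> carrier_mat m n"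
  unfolding carrier_mat_def by simp

lemma adj_index[simp]: fixes A :: cmat shows "i < dim_col A \<Longrightarrow> j < dim_row A \<Longrightarrow> mat_adjoint A $$ (i,j) = cnj (A $$ (j,i))"
  by (simp add: mat_adjoint_def mat_of_rows_def)

lemma adj_adj[simp]: fixes A :: cmat shows "mat_adjoint (mat_adjoint A) = A"
  by (rule eq_matI) auto

lemma adj_mult: fixes A B :: cmat assumes "A \<in> carrier_mat n m" "B \<in> carrier_mat m k"
  shows "mat_adjoint (A * B) = mat_adjoint B * mat_adjoint A"
proof (rule eq_matI)
  fix i j assume ij: "i < dim_row (mat_adjoint B * mat_adjoint A)" "j < dim_col (mat_adjoint B * mat_adjoint A)"
  hence i: "i < k" and j: "j < n" using assms by auto
  have "mat_adjoint (A * B) $$ (i, j) = cnj (\<Sum>l<m. A $$ (j,l) * B $$ (l,i))"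
    using assms i j by (simp add: mult_entry del: index_mult_mat add: index_mult_mat(2,3))
  also have "\<dots> = (\<Sum>l<m. cnj (B $$ (l,i)) * cnj (A $$ (j,l)))"
    by (simp add: mult.commute)
  also have "\<dots> = (mat_adjoint B * mat_adjoint A) $$ (i, j)"
    using assms i j by (simp add: mult_entry del: index_mult_mat add: index_mult_mat(2,3))
  finally show "mat_adjoint (A * B) $$ (i, j) = (mat_adjoint B * mat_adjoint A) $$ (i, j)" .
qed (use assms in auto)

lemma adj_add: fixes A B :: cmat assumes "A \<in> carrier_mat n m" "B \<in> carrier_mat n m"
  shows "mat_adjoint (A + B) = mat_adjoint A + mat_adjoint B"
  using assms by (intro eq_matI) auto

lemma adj_minus: fixes A B :: cmat assumes "A \<in> carrier_mat n m" "B \<in> carrier_mat n m"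
  shows "mat_adjoint (A - B) = mat_adjoint A - mat_adjoint B"
  using assms by (intro eq_matI) auto

lemma adj_smult: fixes A :: cmat shows "mat_adjoint (c \<cdot>\<^sub>m A) = cnj c \<cdot>\<^sub>m mat_adjoint A"
  by (intro eq_matI) auto

lemma adj_one[simp]: "mat_adjoint (1\<^sub>m n :: cmat) = 1\<^sub>m n"
  by (intro eq_matI) auto

lemma mtrace_mult_comm: fixes A B :: cmat assumes "A \<in> carrier_mat n m" "B \<in> carrier_mat m n"
  shows "mtrace (A * B) = mtrace (B * A)"
proof -
  have "mtrace (A * B) = (\<Sum>i<n. \<Sum>k<m. A $$ (i,k) * B $$ (k,i))"
    using assms by (auto simp: mtrace_def mult_entry simp del: index_mult_mat simp add: index_mult_mat(2,3))
  also have "\<dots> = (\<Sum>k<m. \<Sum>i<n. B $$ (k,i) * A $$ (i,k))"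
    by (subst sum.swap) (simp add: mult.commute)
  also have "\<dots> = mtrace (B * A)"
    using assms by (auto simp: mtrace_def mult_entry simp del: index_mult_mat simp add: index_mult_mat(2,3))
  finally show ?thesis .
qed

lemma mtrace_add: fixes A B :: cmat assumes "A \<in> carrier_mat n n" "B \<in> carrier_mat n n"
  shows "mtrace (A + B) = mtrace A + mtrace B"
  using assms by (auto simp: mtrace_def sum.distrib)

lemma mtrace_minus: fixes A B :: cmat assumes "A \<in> carrier_mat n n" "B \<in> carrier_mat n n"
  shows "mtrace (A - B) = mtrace A - mtrace B"
  using assms by (auto simp: mtrace_def sum_subtractf)

lemma mtrace_smult: fixes A :: cmat assumes "A \<in> carrier_mat n n" shows "mtrace (c \<cdot>\<^sub>m A) = c * mtrace A"
  using assms by (auto simp: mtrace_def sum_distrib_left intro!: sum.cong)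

lemma mtrace_one[simp]: "mtrace (1\<^sub>m n :: cmat) = of_nat n"
  by (auto simp: mtrace_def)

lemma mtrace_adj: assumes "A \<in> carrier_mat n n" shows "mtrace (mat_adjoint A) = cnj (mtrace A)"
  using assms by (auto simp: mtrace_def)

lemma qform_sum: assumes "A \<in> carrier_mat n n" "v \<in> carrier_vec n"
  shows "qform A v = (\<Sum>i<n. cnj (v $ i) * (\<Sum>j<n. A $$ (i,j) * v $ j))"
  using assms by (auto simp: qform_def scalar_prod_def atLeast0LessThan intro!: sum.cong)

definition hf :: "cmat \<Rightarrow> nat \<Rightarrow> (nat \<Rightarrow> complex) \<Rightarrow> (nat \<Rightarrow> complex) \<Rightarrow> complex" where
  "hf A n u v = (\<Sum>i<n. \<Sum>j<n. cnj (u i) * A $$ (i,j) * v j)"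

lemma qform_hf: assumes "A \<in> carrier_mat n n"
  shows "qform A (vec n u) = hf A n u u"
  using assms by (simp add: qform_sum hf_def sum_distrib_left mult.assoc)

lemma hf_expand:
  "hf A n (\<lambda>k. u k + c * w k) (\<lambda>k. u k + c * w k) =
   hf A n u u + c * hf A n u w + cnj c * hf A n w u + (cnj c * c) * hf A n w w"
  by (simp add: hf_def algebra_simps sum.distrib sum_distrib_left)

definition ek :: "nat \<Rightarrow> nat \<Rightarrow> complex" where "ek k = (\<lambda>l. if l = k then 1 else 0)"

lemma sum_delta_r: assumes "k < (n::nat)" shows "(\<Sum>j<n. f j * (if j = k then 1 else 0)) = (f k :: complex)"
proof -
  have "(\<Sum>j<n. f j * (if j = k then 1 else 0)) = (\<Sum>j<n. if j = k then f j else 0)"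
    by (rule sum.cong) auto
  also have "\<dots> = f k" using assms by (simp only: sum.delta finite_lessThan) simp
  finally show ?thesis .
qed

lemma sum_delta_l: assumes "k < (n::nat)" shows "(\<Sum>j<n. (if j = k then 1 else 0) * f j) = (f k :: complex)"
proof -
  have "(\<Sum>j<n. (if j = k then 1 else 0) * f j) = (\<Sum>j<n. if j = k then f j else 0)"
    by (rule sum.cong) auto
  also have "\<dots> = f k" using assms by (simp only: sum.delta finite_lessThan) simp
  finally show ?thesis .
qed

lemma cnj_ek[simp]: "cnj (ek k i) = ek k i" by (simp add: ek_def)

lemma hf_ek_right: assumes "k < n" shows "hf A n u (ek k) = (\<Sum>i<n. cnj (u i) * A $$ (i,k))"
  unfolding hf_def ek_def by (simp only: sum_delta_r[OF assms])

lemma hf_ek_left: assumes "k < n" shows "hf A n (ek k) u = (\<Sum>j<n. A $$ (k,j) * u j)"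
proof -
  have "hf A n (ek k) u = (\<Sum>i<n. ek k i * (\<Sum>j<n. A $$ (i,j) * u j))"
    unfolding hf_def by (simp add: sum_distrib_left mult.assoc)
  also have "\<dots> = (\<Sum>j<n. A $$ (k,j) * u j)"
    unfolding ek_def by (simp only: sum_delta_l[OF assms])
  finally show ?thesis .
qed

lemma hf_ek_ek: assumes "i < n" "j < n" shows "hf A n (ek i) (ek j) = A $$ (i,j)"
proof -
  have "hf A n (ek i) (ek j) = (\<Sum>l<n. ek i l * A $$ (l,j))"
    using assms by (simp add: hf_ek_right)
  also have "\<dots> = A $$ (i,j)" unfolding ek_def by (simp only: sum_delta_l[OF assms(1)])
  finally show ?thesis .
qed

lemma psd_hf: assumes "psd_op n A"
  shows "Im (hf A n u u) = 0" "Re (hf A n u u) \<ge> 0"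
proof -
  have A: "A \<in> carrier_mat n n" using assms by (simp add: psd_op_def)
  have "vec n u \<in> carrier_vec n" by simp
  then show "Im (hf A n u u) = 0" "Re (hf A n u u) \<ge> 0"
    using assms unfolding psd_op_def by (auto simp: qform_hf[OF A, symmetric])
qed

lemma psd_hf_real: assumes "psd_op n A" shows "hf A n u u = of_real (Re (hf A n u u))"
  using psd_hf[OF assms] by (simp add: complex_eq_iff)

lemma psd_hermitian_entry: assumes "psd_op n A" "i < n" "j < n"
  shows "A $$ (j,i) = cnj (A $$ (i,j))"
proof -
  let ?u = "ek i" and ?w = "ek j"
  have h: "Im (hf A n (\<lambda>k. ?u k + c * ?w k) (\<lambda>k. ?u k + c * ?w k)) = 0" for c
    by (rule psd_hf[OF assms(1)])
  have ii: "Im (A $$ (i,i)) = 0" using psd_hf(1)[OF assms(1), of ?u] hf_ek_ek[OF assms(2,2)] by simp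
  have jj: "Im (A $$ (j,j)) = 0" using psd_hf(1)[OF assms(1), of ?w] hf_ek_ek[OF assms(3,3)] by simp
  have e1: "Im (A $$ (i,j) + A $$ (j,i)) = 0"
    using h[of 1] ii jj unfolding hf_expand by (simp add: hf_ek_ek assms)
  have e2: "Re (A $$ (i,j)) - Re (A $$ (j,i)) = 0"
    using h[of \<i>] ii jj unfolding hf_expand by (simp add: hf_ek_ek assms)
  show ?thesis using e1 e2 by (simp add: complex_eq_iff)
qed

lemma psd_hermitian: assumes "psd_op n A" shows "mat_adjoint A = A"
proof -
  have A: "A \<in> carrier_mat n n" using assms by (simp add: psd_op_def)
  show ?thesis
  proof (rule eq_matI)
    fix i j assume "i < dim_row A" "j < dim_col A"
    then show "mat_adjoint A $$ (i, j) = A $$ (i, j)"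
      using A psd_hermitian_entry[OF assms, of j i] by simp
  qed (use A in auto)
qed

lemma hf_swap: assumes "psd_op n A" shows "hf A n w u = cnj (hf A n u w)"
proof -
  have "hf A n w u = (\<Sum>i<n. \<Sum>j<n. cnj (w i) * A $$ (i,j) * u j)" by (simp add: hf_def)
  also have "\<dots> = (\<Sum>j<n. \<Sum>i<n. cnj (cnj (u j) * A $$ (j,i) * w i))"
  proof (subst sum.swap, intro sum.cong refl)
    fix i j assume "i \<in> {..<n}" "j \<in> {..<n}"
    then have "A $$ (i,j) = cnj (A $$ (j,i))" using psd_hermitian_entry[OF assms, of j i] by simp
    then show "cnj (w i) * A $$ (i, j) * u j = cnj (cnj (u j) * A $$ (j, i) * w i)" by simp
  qed
  also have "\<dots> = cnj (hf A n u w)" by (simp add: hf_def)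
  finally show ?thesis .
qed

lemma psd_cs: assumes "psd_op n A"
  shows "(cmod (hf A n u w))\<^sup>2 \<le> Re (hf A n u u) * Re (hf A n w w)"
proof -
  define x where "x = hf A n w u"
  define a where "a = Re (hf A n w w)"
  define q where "q = Re (hf A n u u)"
  have a0: "a \<ge> 0" using psd_hf[OF assms] a_def by auto
  have q0: "q \<ge> 0" using psd_hf[OF assms] q_def by auto
  have uw: "hf A n u w = cnj x" using hf_swap[OF assms, of u w] x_def by simp
  have wwr: "hf A n w w = of_real a" using psd_hf_real[OF assms] a_def by simp
  have uur: "hf A n u u = of_real q" using psd_hf_real[OF assms] q_def by simp
  have key: "0 \<le> q + 2 * Re (c * cnj x) + (cmod c)\<^sup>2 * a" for c
  proof -
    have "0 \<le> Re (hf A n (\<lambda>k. u k + c * w k) (\<lambda>k. u k + c * w k))" by (rule psd_hf[OF assms])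
    also have "\<dots> = q + Re (c * cnj x) + Re (cnj c * x) + (cmod c)\<^sup>2 * a"
      unfolding hf_expand uw wwr uur x_def[symmetric]
      by (simp add: complex_norm_square[symmetric] mult.commute)
    also have "Re (cnj c * x) = Re (c * cnj x)"
      by (metis complex_cnj_cnj complex_cnj_mult cnj.sel(1))
    finally show ?thesis by simp
  qed
  have nx: "(cmod (hf A n u w))\<^sup>2 = (cmod x)\<^sup>2" using uw by simp
  show ?thesis
  proof (cases "a = 0")
    case True
    have "x = 0"
    proof (rule ccontr)
      assume "x \<noteq> 0"
      hence px: "(cmod x)\<^sup>2 > 0" by simp
      define t where "t = (q + 1) / (2 * (cmod x)\<^sup>2)"
      have h0: "0 \<le> q + 2 * Re (of_real (- t) * x * cnj x)"
        using key[of "of_real (-t) * x"] True by (simp add: mult.assoc)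
      have h1: "Re (of_real (- t) * x * cnj x) = - (t * (cmod x)\<^sup>2)"
        by (simp add: mult.assoc complex_norm_square[symmetric] del: of_real_minus)
      have h2: "t * (cmod x)\<^sup>2 = (q + 1) / 2" using px by (simp add: t_def)
      show False using h0 unfolding h1 h2 by simp
    qed
    then show ?thesis using nx q0 a0 by (simp add: q_def[symmetric] a_def[symmetric])
  next
    case False
    hence ap: "a > 0" using a0 by simp
    have "0 \<le> q + 2 * Re (of_real (- 1 / a) * x * cnj x) + (cmod (of_real (- 1 / a) * x))\<^sup>2 * a"
      using key[of "of_real (-1/a) * x"] by (simp add: mult.assoc)
    also have "Re (of_real (- 1 / a) * x * cnj x) = - (cmod x)\<^sup>2 / a"
      by (simp add: mult.assoc complex_norm_square[symmetric] del: of_real_minus)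
    also have "(cmod (of_real (- 1 / a) * x))\<^sup>2 * a = (cmod x)\<^sup>2 / a"
    proof -
      have "cmod (of_real (- 1 / a) * x) = cmod x / a" using ap by (simp add: norm_divide)
      then show ?thesis using ap by (simp add: power2_eq_square)
    qed
    finally have "(cmod x)\<^sup>2 / a \<le> q" by simp
    hence "(cmod x)\<^sup>2 \<le> q * a" using ap by (simp add: divide_le_eq)
    then show ?thesis using nx by (simp add: q_def a_def)
  qed
qed


lemma psd_carrier: "psd_op n A \<Longrightarrow> A \<in> carrier_mat n n" by (simp add: psd_op_def)

lemma psd_diag_real: assumes "psd_op n A" "k < n"
  shows "A $$ (k,k) = of_real (Re (A $$ (k,k)))" "Re (A $$ (k,k)) \<ge> 0"
  using psd_hf_real[OF assms(1), of "ek k"] psd_hf(2)[OF assms(1), of "ek k"]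
  by (simp_all add: hf_ek_ek[OF assms(2,2)])

lemma psd_entry_cs: assumes "psd_op n A" "i < n" "k < n"
  shows "(cmod (A $$ (i,k)))\<^sup>2 \<le> Re (A $$ (i,i)) * Re (A $$ (k,k))"
  using psd_cs[OF assms(1), of "ek i" "ek k"] by (simp add: hf_ek_ek assms)

lemma ivl_insert: "k < (n::nat) \<Longrightarrow> {k..<n} = insert k {Suc k..<n}" by auto

lemma peel:
  fixes A :: cmat
  assumes "r \<le> n" "psd_op n A" "\<forall>i<n. \<forall>j<n. (i < n - r \<or> j < n - r) \<longrightarrow> A $$ (i,j) = 0"
  shows "\<exists>w. \<forall>i<n. \<forall>j<n. A $$ (i,j) = (\<Sum>m\<in>{n-r..<n}. w m i * cnj (w m j))"
  using assms
proof (induction r arbitrary: A)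
  case 0
  then show ?case by auto
next
  case (Suc r)
  define k where "k = n - Suc r"
  have kn: "k < n" and nr: "n - r = Suc k" using Suc.prems(1) by (auto simp: k_def)
  have ivl: "{k..<n} = insert k {Suc k..<n}" using kn by auto
  have hA: "A \<in> carrier_mat n n" using Suc.prems(2) by (simp add: psd_op_def)
  define a where "a = Re (A $$ (k,k))"
  have Akk: "A $$ (k,k) = of_real a" and a0: "a \<ge> 0"
    using psd_diag_real[OF Suc.prems(2) kn] by (auto simp: a_def)
  have herm: "A $$ (j,i) = cnj (A $$ (i,j))" if "i < n" "j < n" for i j
    using psd_hermitian_entry[OF Suc.prems(2) that] .
  have zero_old: "A $$ (i,j) = 0" if "i < n" "j < n" "i < k \<or> j < k" for i j
    using Suc.prems(3) that by (auto simp: k_def)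
  show ?case
  proof (cases "a = 0")
    case True
    have colk: "A $$ (i,k) = 0" if "i < n" for i
    proof -
      have "(cmod (A $$ (i,k)))\<^sup>2 \<le> Re (A $$ (i,i)) * a"
        using psd_entry_cs[OF Suc.prems(2) that kn] by (simp add: a_def)
      then show ?thesis using True by simp
    qed
    have rowk: "A $$ (k,j) = 0" if "j < n" for j
      using herm[OF that kn] colk[OF that] by simp
    have z: "\<forall>i<n. \<forall>j<n. (i < n - r \<or> j < n - r) \<longrightarrow> A $$ (i,j) = 0"
    proof (intro allI impI)
      fix i j assume ij: "i < n" "j < n" "i < n - r \<or> j < n - r"
      then consider "i < k \<or> j < k" | "i = k" | "j = k" using nr by linarith
      then show "A $$ (i,j) = 0" using zero_old ij colk rowk by cases auto
    qed
    obtain w where w: "\<forall>i<n. \<forall>j<n. A $$ (i,j) = (\<Sum>m\<in>{n-r..<n}. w m i * cnj (w m j))"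
      using Suc.IH[OF _ Suc.prems(2) z] Suc.prems(1) by auto
    define w' where "w' = w(k := (\<lambda>_. 0))"
    have "\<forall>i<n. \<forall>j<n. A $$ (i,j) = (\<Sum>m\<in>{n - Suc r..<n}. w' m i * cnj (w' m j))"
    proof (intro allI impI)
      fix i j assume ij: "i < n" "j < n"
      have "(\<Sum>m\<in>{n - Suc r..<n}. w' m i * cnj (w' m j)) = (\<Sum>m\<in>{Suc k..<n}. w' m i * cnj (w' m j))"
        unfolding k_def[symmetric] ivl by (simp add: w'_def)
      also have "\<dots> = (\<Sum>m\<in>{Suc k..<n}. w m i * cnj (w m j))"
        by (rule sum.cong) (auto simp: w'_def)
      also have "\<dots> = A $$ (i,j)" using w ij nr by simp
      finally show "A $$ (i,j) = (\<Sum>m\<in>{n - Suc r..<n}. w' m i * cnj (w' m j))" by simp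
    qed
    then show ?thesis by blast
  next
    case False
    hence ap: "a > 0" using a0 by simp
    define s where "s = sqrt a"
    have sp: "s > 0" and ss: "s * s = a" using ap by (auto simp: s_def)
    define v where "v i = A $$ (i,k) / of_real s" for i
    define A' where "A' = mat n n (\<lambda>(i,j). A $$ (i,j) - v i * cnj (v j))"
    have A'c: "A' \<in> carrier_mat n n" by (simp add: A'_def)
    have A'e: "A' $$ (i,j) = A $$ (i,j) - v i * cnj (v j)" if "i < n" "j < n" for i j
      using that by (simp add: A'_def)
    have vv: "v i * cnj (v j) = A $$ (i,k) * A $$ (k,j) / of_real a" if "i < n" "j < n" for i j
    proof -
      have "v i * cnj (v j) = A $$ (i,k) * cnj (A $$ (j,k)) / (of_real s * of_real s)"
        by (simp add: v_def)
      also have "of_real s * of_real s = (of_real a :: complex)" using ss by (metis of_real_mult)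
      also have "cnj (A $$ (j,k)) = A $$ (k,j)" using herm[OF that(2) kn] by simp
      finally show ?thesis .
    qed
    have hfA': "hf A' n u u = hf A n u u - of_real ((cmod (hf A n u (ek k)))\<^sup>2 / a)" for u
    proof -
      define y where "y = hf A n u (ek k)"
      have y: "y = (\<Sum>i<n. cnj (u i) * A $$ (i,k))" using hf_ek_right[OF kn] y_def by simp
      have "hf A' n u u = (\<Sum>i<n. \<Sum>j<n. cnj (u i) * A $$ (i,j) * u j - (cnj (u i) * v i) * (cnj (v j) * u j))"
        unfolding hf_def by (intro sum.cong refl) (simp add: A'e algebra_simps)
      also have "\<dots> = hf A n u u - (\<Sum>i<n. cnj (u i) * v i) * (\<Sum>j<n. cnj (v j) * u j)"
        by (simp add: hf_def sum_subtractf sum_distrib_left sum_distrib_right) (rule sum.swap)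
      also have "(\<Sum>i<n. cnj (u i) * v i) = y / of_real s"
        by (simp add: y v_def sum_divide_distrib)
      also have "(\<Sum>j<n. cnj (v j) * u j) = cnj (y / of_real s)"
        by (simp add: y v_def sum_divide_distrib mult.commute)
      also have "y / of_real s * cnj (y / of_real s) = of_real ((cmod y)\<^sup>2 / a)"
      proof -
        have "y / of_real s * cnj (y / of_real s) = (y * cnj y) / (of_real s * of_real s)" by simp
        also have "of_real s * of_real s = (of_real a :: complex)" using ss by (metis of_real_mult)
        also have "y * cnj y = of_real ((cmod y)\<^sup>2)" by (rule complex_norm_square[symmetric])
        finally show ?thesis by simp
      qed
      finally show ?thesis by (simp add: y_def)
    qed
    have psdA': "psd_op n A'"
      unfolding psd_op_def
    proof (intro conjI ballI A'c)
      fix x :: "complex vec" assume x: "x \<in> carrier_vec n"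
      have xe: "x = vec n (\<lambda>i. x $ i)" using x by auto
      have q: "qform A' x = hf A' n (\<lambda>i. x $ i) (\<lambda>i. x $ i)"
        by (subst xe) (rule qform_hf[OF A'c])
      let ?u = "\<lambda>i. x $ i"
      have cs: "(cmod (hf A n ?u (ek k)))\<^sup>2 \<le> Re (hf A n ?u ?u) * a"
        using psd_cs[OF Suc.prems(2), of ?u "ek k"] by (simp add: hf_ek_ek[OF kn kn] a_def)
      have "Im (hf A n ?u ?u) = 0" by (rule psd_hf[OF Suc.prems(2)])
      then show "Im (qform A' x) = 0" unfolding q hfA' by simp
      have "(cmod (hf A n ?u (ek k)))\<^sup>2 / a \<le> Re (hf A n ?u ?u)"
        using cs ap by (simp add: divide_le_eq mult.commute)
      then show "0 \<le> Re (qform A' x)" unfolding q hfA' by simp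
    qed
    have z: "\<forall>i<n. \<forall>j<n. (i < n - r \<or> j < n - r) \<longrightarrow> A' $$ (i,j) = 0"
    proof (intro allI impI)
      fix i j assume ij: "i < n" "j < n" "i < n - r \<or> j < n - r"
      then consider "i < k" | "j < k" | "i = k" | "j = k" using nr by linarith
      then show "A' $$ (i,j) = 0"
      proof cases
        case 1 then show ?thesis using ij zero_old[of i j] zero_old[of i k] kn
          by (simp add: A'e v_def)
      next
        case 2 then show ?thesis using ij zero_old[of i j] zero_old[of j k] kn
          by (simp add: A'e v_def)
      next
        case 3 then show ?thesis using ij kn ap by (simp add: A'e vv Akk)
      next
        case 4 then show ?thesis using ij kn ap by (simp add: A'e vv Akk)
      qed
    qed
    obtain w where w: "\<forall>i<n. \<forall>j<n. A' $$ (i,j) = (\<Sum>m\<in>{n-r..<n}. w m i * cnj (w m j))"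
      using Suc.IH[OF _ psdA' z] Suc.prems(1) by auto
    define w' where "w' = w(k := v)"
    have "\<forall>i<n. \<forall>j<n. A $$ (i,j) = (\<Sum>m\<in>{n - Suc r..<n}. w' m i * cnj (w' m j))"
    proof (intro allI impI)
      fix i j assume ij: "i < n" "j < n"
      have "(\<Sum>m\<in>{n - Suc r..<n}. w' m i * cnj (w' m j)) = v i * cnj (v j) + (\<Sum>m\<in>{Suc k..<n}. w' m i * cnj (w' m j))"
        unfolding k_def[symmetric] ivl by (simp add: w'_def)
      also have "(\<Sum>m\<in>{Suc k..<n}. w' m i * cnj (w' m j)) = (\<Sum>m\<in>{Suc k..<n}. w m i * cnj (w m j))"
        by (rule sum.cong) (auto simp: w'_def)
      also have "\<dots> = A' $$ (i,j)" using w ij nr by simp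
      also have "v i * cnj (v j) + A' $$ (i,j) = A $$ (i,j)" using ij by (simp add: A'e)
      finally show "A $$ (i,j) = (\<Sum>m\<in>{n - Suc r..<n}. w' m i * cnj (w' m j))" by simp
    qed
    then show ?thesis by blast
  qed
qed

lemma psd_decomp: assumes "psd_op n A" shows "\<exists>B \<in> carrier_mat n n. A = mat_adjoint B * B"
proof -
  have hA: "A \<in> carrier_mat n n" using assms by (simp add: psd_op_def)
  obtain w where w: "\<forall>i<n. \<forall>j<n. A $$ (i,j) = (\<Sum>m\<in>{n-n..<n}. w m i * cnj (w m j))"
    using peel[of n n A] assms by auto
  define W where "W = mat n n (\<lambda>(i,m). w m i)"
  have Wc: "W \<in> carrier_mat n n" by (simp add: W_def)
  have "A = W * mat_adjoint W"
  proof (rule eq_matI)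
    fix i j assume ij: "i < dim_row (W * mat_adjoint W)" "j < dim_col (W * mat_adjoint W)"
    hence i: "i < n" and j: "j < n" using Wc by auto
    have "(W * mat_adjoint W) $$ (i,j) = (\<Sum>m<n. W $$ (i,m) * cnj (W $$ (j,m)))"
      using Wc i j by (simp add: mult_entry del: index_mult_mat add: index_mult_mat(2,3))
    also have "\<dots> = (\<Sum>m<n. w m i * cnj (w m j))"
      using i j by (intro sum.cong refl) (simp add: W_def)
    also have "\<dots> = A $$ (i,j)" using w i j by (simp add: atLeast0LessThan)
    finally show "A $$ (i, j) = (W * mat_adjoint W) $$ (i, j)" by simp
  qed (use hA Wc in auto)
  then show ?thesis using Wc by (intro bexI[of _ "mat_adjoint W"]) auto
qed

lemma trace_adj_psd: assumes "psd_op n M" "Y \<in> carrier_mat n m"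
  shows "Re (mtrace (mat_adjoint Y * M * Y)) \<ge> 0"
proof -
  have hM: "M \<in> carrier_mat n n" using assms(1) by (simp add: psd_op_def)
  have e: "(mat_adjoint Y * M * Y) $$ (j,j) = hf M n (\<lambda>i. Y $$ (i,j)) (\<lambda>i. Y $$ (i,j))" if "j < m" for j
  proof -
    have "(mat_adjoint Y * M * Y) $$ (j,j) = (\<Sum>l<n. (mat_adjoint Y * M) $$ (j,l) * Y $$ (l,j))"
      using that assms hM by (subst mult_entry) (auto simp del: index_mult_mat simp add: index_mult_mat(2,3))
    also have "\<dots> = (\<Sum>l<n. (\<Sum>i<n. cnj (Y $$ (i,j)) * M $$ (i,l)) * Y $$ (l,j))"
      using that assms hM by (intro sum.cong refl) (subst mult_entry, auto simp del: index_mult_mat simp add: index_mult_mat(2,3))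
    also have "\<dots> = hf M n (\<lambda>i. Y $$ (i,j)) (\<lambda>i. Y $$ (i,j))"
      unfolding hf_def by (subst sum.swap) (simp add: sum_distrib_right)
    finally show ?thesis .
  qed
  have "mtrace (mat_adjoint Y * M * Y) = (\<Sum>j<m. (mat_adjoint Y * M * Y) $$ (j,j))"
    using assms hM by (simp add: mtrace_def del: index_mult_mat add: index_mult_mat(2,3))
  also have "\<dots> = (\<Sum>j<m. hf M n (\<lambda>i. Y $$ (i,j)) (\<lambda>i. Y $$ (i,j)))"
    by (intro sum.cong refl) (simp add: e)
  finally have "Re (mtrace (mat_adjoint Y * M * Y)) = (\<Sum>j<m. Re (hf M n (\<lambda>i. Y $$ (i,j)) (\<lambda>i. Y $$ (i,j))))"
    by simp
  also have "\<dots> \<ge> 0" by (intro sum_nonneg psd_hf(2)[OF assms(1)])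
  finally show ?thesis .
qed


lemma sum_split_prod: "(\<Sum>l<a*b. f l) = (\<Sum>p<a. \<Sum>q<(b::nat). f (p*b + q)) "
proof -
  have "(\<Sum>l<a*b. f l) = (\<Sum>p<a. sum f {p*b..<p*b+b})" by (rule sum.nat_group[symmetric])
  also have "\<dots> = (\<Sum>p<a. \<Sum>q<b. f (p*b + q))"
  proof (rule sum.cong[OF refl])
    fix p assume "p \<in> {..<a}"
    have "sum f {p*b..<p*b+b} = sum f {0+p*b..<b+p*b}" by (simp add: add.commute)
    also have "\<dots> = (\<Sum>q\<in>{0..<b}. f (q + p*b))" by (rule sum.shift_bounds_nat_ivl)
    finally show "sum f {p*b..<p*b+b} = (\<Sum>q<b. f (p*b + q))" by (simp add: atLeast0LessThan add.commute)
  qed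
  finally show ?thesis .
qed

lemma kron_dims[simp]: "dim_row (kron A B) = dim_row A * dim_row B" "dim_col (kron A B) = dim_col A * dim_col B"
  by (simp_all add: kron_def)

lemma kron_carrier[simp]: "A \<in> carrier_mat a1 a2 \<Longrightarrow> B \<in> carrier_mat b1 b2 \<Longrightarrow> kron A B \<in> carrier_mat (a1*b1) (a2*b2)"
  unfolding carrier_mat_def by simp

lemma kron_index: "i < dim_row A * dim_row B \<Longrightarrow> j < dim_col A * dim_col B \<Longrightarrow>
  kron A B $$ (i,j) = A $$ (i div dim_row B, j div dim_col B) * B $$ (i mod dim_row B, j mod dim_col B)"
  by (simp add: kron_def)

lemma divmod_bounds: assumes "i < a * (b::nat)" shows "i div b < a" "i mod b < b" "b > 0"
proof -
  show b0: "b > 0" using assms by (cases b) auto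
  show "i mod b < b" using b0 by simp
  show "i div b < a" using assms by (simp add: less_mult_imp_div_less)
qed

lemma kron_mult:
  assumes A: "A \<in> carrier_mat a1 a2" and B: "B \<in> carrier_mat b1 b2"
    and C: "C \<in> carrier_mat a2 a3" and D: "D \<in> carrier_mat b2 b3"
  shows "kron A B * kron C D = kron (A * C) (B * D)"
proof (rule eq_matI)
  fix i j assume "i < dim_row (kron (A * C) (B * D))" "j < dim_col (kron (A * C) (B * D))"
  hence i: "i < a1 * b1" and j: "j < a3 * b3" using A B C D by auto
  note bi = divmod_bounds[OF i] and bj = divmod_bounds[OF j]
  have "(kron A B * kron C D) $$ (i,j) = (\<Sum>l<a2*b2. kron A B $$ (i,l) * kron C D $$ (l,j))"
    using A B C D i j by (subst mult_entry) (auto simp del: index_mult_mat simp add: index_mult_mat(2,3))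
  also have "\<dots> = (\<Sum>p<a2. \<Sum>q<b2. kron A B $$ (i,p*b2+q) * kron C D $$ (p*b2+q,j))"
    by (rule sum_split_prod)
  also have "\<dots> = (\<Sum>p<a2. \<Sum>q<b2. (A $$ (i div b1, p) * C $$ (p, j div b3)) * (B $$ (i mod b1, q) * D $$ (q, j mod b3)))"
  proof (intro sum.cong refl)
    fix p q assume p: "p \<in> {..<a2}" and q: "q \<in> {..<b2}"
    have l: "p*b2+q < a2*b2" using p q
      by (metis lessThan_iff add.commute add_less_mono1 less_imp_le_nat mult_Suc mult_le_mono1 Suc_leI order_less_le_trans add_less_cancel_left)
    have qb: "q < b2" using q by simp
    have ld: "(p*b2+q) div b2 = p" "(p*b2+q) mod b2 = q" "q mod b2 = q" using qb by auto
    show "kron A B $$ (i,p*b2+q) * kron C D $$ (p*b2+q,j) = (A $$ (i div b1, p) * C $$ (p, j div b3)) * (B $$ (i mod b1, q) * D $$ (q, j mod b3))"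
      using A B C D i j l by (simp add: kron_index ld)
  qed
  also have "\<dots> = (\<Sum>p<a2. A $$ (i div b1, p) * C $$ (p, j div b3)) * (\<Sum>q<b2. B $$ (i mod b1, q) * D $$ (q, j mod b3))"
    by (simp add: sum_product)
  also have "\<dots> = kron (A * C) (B * D) $$ (i,j)"
    using A B C D i j bi bj by (simp add: kron_index mult_entry del: index_mult_mat add: index_mult_mat(2,3))
  finally show "(kron A B * kron C D) $$ (i, j) = kron (A * C) (B * D) $$ (i, j)" .
qed (use A B C D in auto)

lemma kron_adj: fixes A B :: cmat
  shows "mat_adjoint (kron A B) = kron (mat_adjoint A) (mat_adjoint B)"
proof (rule eq_matI)
  fix i j assume "i < dim_row (kron (mat_adjoint A) (mat_adjoint B))" "j < dim_col (kron (mat_adjoint A) (mat_adjoint B))"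
  hence i: "i < dim_col A * dim_col B" and j: "j < dim_row A * dim_row B" by auto
  note bi = divmod_bounds[OF i] and bj = divmod_bounds[OF j]
  show "mat_adjoint (kron A B) $$ (i, j) = kron (mat_adjoint A) (mat_adjoint B) $$ (i, j)"
    using i j bi bj by (simp add: kron_index)
qed auto

lemma kron_trace: fixes A B :: cmat
  assumes A: "A \<in> carrier_mat a a" and B: "B \<in> carrier_mat b b"
  shows "mtrace (kron A B) = mtrace A * mtrace B"
proof -
  have "mtrace (kron A B) = (\<Sum>l<a*b. kron A B $$ (l,l))" using A B by (simp add: mtrace_def)
  also have "\<dots> = (\<Sum>p<a. \<Sum>q<b. kron A B $$ (p*b+q, p*b+q))" by (rule sum_split_prod)
  also have "\<dots> = (\<Sum>p<a. \<Sum>q<b. A $$ (p,p) * B $$ (q,q))"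
  proof (intro sum.cong refl)
    fix p q assume p: "p \<in> {..<a}" and q: "q \<in> {..<b}"
    have l: "p*b+q < a*b" using p q
      by (metis lessThan_iff add.commute add_less_mono1 less_imp_le_nat mult_Suc mult_le_mono1 Suc_leI order_less_le_trans add_less_cancel_left)
    have qb: "q < b" using q by simp
    have ld: "(p*b+q) div b = p" "(p*b+q) mod b = q" "q mod b = q" using qb by auto
    show "kron A B $$ (p*b+q, p*b+q) = A $$ (p,p) * B $$ (q,q)"
      using A B l by (simp add: kron_index ld)
  qed
  also have "\<dots> = mtrace A * mtrace B" using A B by (simp add: mtrace_def sum_product)
  finally show ?thesis .
qed

lemma kron_one: "kron (1\<^sub>m a) (1\<^sub>m b) = (1\<^sub>m (a*b) :: cmat)"
proof (rule eq_matI)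
  fix i j assume "i < dim_row (1\<^sub>m (a*b) :: cmat)" "j < dim_col (1\<^sub>m (a*b) :: cmat)"
  hence i: "i < a * b" and j: "j < a * b" by auto
  note bi = divmod_bounds[OF i] and bj = divmod_bounds[OF j]
  have "(i div b = j div b \<and> i mod b = j mod b) = (i = j)"
    by (metis div_mult_mod_eq)
  then show "kron (1\<^sub>m a) (1\<^sub>m b) $$ (i, j) = (1\<^sub>m (a*b) :: cmat) $$ (i, j)"
    using i j bi bj by (auto simp: kron_index)
qed auto

lemma tp_carrier[simp]: "A \<in> carrier_mat d d \<Longrightarrow> tensor_pow A n \<in> carrier_mat (d^n) (d^n)"
  by (induction n) (auto simp: mult.commute)

lemma tp_mult: assumes "A \<in> carrier_mat d d" "B \<in> carrier_mat d d"
  shows "tensor_pow (A * B) n = tensor_pow A n * tensor_pow B n"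
proof (induction n)
  case 0 then show ?case by simp
next
  case (Suc n)
  have "tensor_pow (A * B) (Suc n) = kron (tensor_pow A n * tensor_pow B n) (A * B)"
    using Suc by simp
  also have "\<dots> = kron (tensor_pow A n) A * kron (tensor_pow B n) B"
    by (rule kron_mult[OF tp_carrier[OF assms(1)] assms(1) tp_carrier[OF assms(2)] assms(2), symmetric])
  finally show ?case by simp
qed

lemma tp_adj: "tensor_pow (mat_adjoint A) n = mat_adjoint (tensor_pow A n)"
  by (induction n) (simp_all add: kron_adj)

lemma tp_trace: assumes "A \<in> carrier_mat d d" shows "mtrace (tensor_pow A n) = (mtrace A)^n"
proof (induction n)
  case 0 then show ?case by (simp add: mtrace_def)
next
  case (Suc n)
  then show ?case using assms by (simp add: kron_trace[OF tp_carrier[OF assms] assms])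
qed

lemma tp_one: "tensor_pow (1\<^sub>m d) n = (1\<^sub>m (d^n) :: cmat)"
  by (induction n) (simp_all add: kron_one mult.commute)


lemma pd_minv: fixes A :: cmat
  assumes "pd_op n A"
  shows "minv A \<in> carrier_mat n n" "A * minv A = 1\<^sub>m n" "minv A * A = 1\<^sub>m n"
proof -
  have A: "A \<in> carrier_mat n n" using assms by (simp add: pd_op_def psd_op_def)
  have "det A \<noteq> 0"
  proof
    assume "det A = 0"
    then obtain v where v: "v \<in> carrier_vec n" "v \<noteq> 0\<^sub>v n" "A *\<^sub>v v = 0\<^sub>v n"
      using det_0_iff_vec_prod_zero[OF A] by auto
    have "qform A v = 0" using v by (simp add: qform_def)
    then show False using assms v unfolding pd_op_def by force
  qed
  then have "A \<in> Units (ring_mat TYPE(complex) n ())" by (rule det_non_zero_imp_unit[OF A])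
  then obtain B where B: "B \<in> carrier_mat n n" "B * A = 1\<^sub>m n" "A * B = 1\<^sub>m n"
    by (auto simp: Units_def ring_mat_def)
  have ex: "\<exists>B. B \<in> carrier_mat (dim_row A) (dim_row A) \<and> A * B = 1\<^sub>m (dim_row A) \<and> B * A = 1\<^sub>m (dim_row A)"
    using A B by auto
  from someI_ex[OF ex] A show "minv A \<in> carrier_mat n n" "A * minv A = 1\<^sub>m n" "minv A * A = 1\<^sub>m n"
    unfolding minv_def by auto
qed

lemma inv_hermitian: fixes A B :: cmat
  assumes "A \<in> carrier_mat n n" "B \<in> carrier_mat n n" "mat_adjoint A = A" "A * B = 1\<^sub>m n" "B * A = 1\<^sub>m n"
  shows "mat_adjoint B = B"
proof -
  have "mat_adjoint B * A = 1\<^sub>m n"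
    using adj_mult[OF assms(1,2)] assms by simp
  have e1: "mat_adjoint B * (A * B) = mat_adjoint B"
    unfolding assms(4) by (rule right_mult_one_mat[OF adj_carrier[OF assms(2)]])
  have e2: "(mat_adjoint B * A) * B = mat_adjoint B * (A * B)"
    by (rule assoc_mult_mat) (use assms in auto)
  have e3: "(mat_adjoint B * A) * B = B"
    unfolding \<open>mat_adjoint B * A = 1\<^sub>m n\<close> by (rule left_mult_one_mat[OF assms(2)])
  show ?thesis using e1 e2 e3 by simp
qed

lemma quad_disc: fixes a x b :: real
  assumes "\<And>t. 0 \<le> a + 2 * t * x + t\<^sup>2 * b"
  shows "x\<^sup>2 \<le> a * b"
proof -
  have a0: "a \<ge> 0" using assms[of 0] by simp
  show ?thesis
  proof (cases "b = 0")
    case True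
    have "x = 0"
    proof (rule ccontr)
      assume "x \<noteq> 0"
      have "0 \<le> a + 2 * (- (a + 1) / (2 * x)) * x" using assms[of "- (a + 1) / (2 * x)"] True by simp
      also have "2 * (- (a + 1) / (2 * x)) * x = - (a + 1)" using \<open>x \<noteq> 0\<close> by (simp add: field_simps)
      finally show False by simp
    qed
    then show ?thesis using True by simp
  next
    case False
    have "0 \<le> a + 2 * (- x / b) * x + (- x / b)\<^sup>2 * b" by (rule assms)
    also have "\<dots> = a - x\<^sup>2 / b" using False by (simp add: field_simps power2_eq_square)
    finally have h: "x\<^sup>2 / b \<le> a" by simp
    have "b \<ge> 0"
    proof (rule ccontr)
      assume "\<not> b \<ge> 0"
      hence bn: "b < 0" by simp
      define t where "t = sqrt ((a + 1) / (- b))"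
      have tt: "t\<^sup>2 = (a + 1) / (- b)" using bn a0 by (simp add: t_def divide_nonneg_neg)
      have "0 \<le> (a + 2 * t * x + t\<^sup>2 * b) + (a + 2 * (-t) * x + (-t)\<^sup>2 * b)"
        using assms[of t] assms[of "-t"] by linarith
      also have "\<dots> = 2 * (a + t\<^sup>2 * b)" by (simp add: algebra_simps)
      also have "t\<^sup>2 * b = - (a + 1)" using bn unfolding tt by (simp add: field_simps)
      finally show False by simp
    qed
    then have "b > 0" using False by simp
    then show ?thesis using h by (simp add: divide_le_eq mult.commute)
  qed
qed


lemma mult_carrier_sq[simp]: "A \<in> carrier_mat N N \<Longrightarrow> B \<in> carrier_mat N N \<Longrightarrow> A * B \<in> carrier_mat N N"
  by (rule mult_carrier_mat)

definition TT :: "cmat \<Rightarrow> cmat \<Rightarrow> cmat \<Rightarrow> cmat \<Rightarrow> complex" where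
  "TT M \<sigma> P Q = mtrace (P * M * Q * \<sigma>)"

lemma TT_add1: fixes M \<sigma> P1 P2 Q :: cmat
  assumes c: "M \<in> carrier_mat N N" "\<sigma> \<in> carrier_mat N N" "P1 \<in> carrier_mat N N" "P2 \<in> carrier_mat N N" "Q \<in> carrier_mat N N"
  shows "TT M \<sigma> (P1 + P2) Q = TT M \<sigma> P1 Q + TT M \<sigma> P2 Q"
proof -
  have "(P1 + P2) * M = P1 * M + P2 * M" by (rule add_mult_distrib_mat) (use c in auto)
  hence "(P1 + P2) * M * Q = P1 * M * Q + P2 * M * Q"
    using add_mult_distrib_mat[of "P1 * M" N N "P2 * M" Q N] c by simp
  hence "(P1 + P2) * M * Q * \<sigma> = P1 * M * Q * \<sigma> + P2 * M * Q * \<sigma>"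
    using add_mult_distrib_mat[of "P1 * M * Q" N N "P2 * M * Q" \<sigma> N] c by simp
  then show ?thesis unfolding TT_def using c by (simp add: mtrace_add[of _ N])
qed

lemma TT_smult1: fixes M \<sigma> P Q :: cmat
  assumes c: "M \<in> carrier_mat N N" "\<sigma> \<in> carrier_mat N N" "P \<in> carrier_mat N N" "Q \<in> carrier_mat N N"
  shows "TT M \<sigma> (k \<cdot>\<^sub>m P) Q = k * TT M \<sigma> P Q"
proof -
  have "(k \<cdot>\<^sub>m P) * M * Q * \<sigma> = k \<cdot>\<^sub>m (P * M * Q * \<sigma>)"
    using c by (simp add: mult_smult_assoc_mat[of _ N N _ N])
  then show ?thesis unfolding TT_def using c by (simp add: mtrace_smult[of _ N])
qed

lemma TT_add2: fixes M \<sigma> P Q1 Q2 :: cmat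
  assumes c: "M \<in> carrier_mat N N" "\<sigma> \<in> carrier_mat N N" "P \<in> carrier_mat N N" "Q1 \<in> carrier_mat N N" "Q2 \<in> carrier_mat N N"
  shows "TT M \<sigma> P (Q1 + Q2) = TT M \<sigma> P Q1 + TT M \<sigma> P Q2"
proof -
  have "P * M * (Q1 + Q2) = P * M * Q1 + P * M * Q2" by (rule mult_add_distrib_mat) (use c in auto)
  hence "P * M * (Q1 + Q2) * \<sigma> = P * M * Q1 * \<sigma> + P * M * Q2 * \<sigma>"
    using add_mult_distrib_mat[of "P * M * Q1" N N "P * M * Q2" \<sigma> N] c by simp
  then show ?thesis unfolding TT_def using c by (simp add: mtrace_add[of _ N])
qed

lemma TT_smult2: fixes M \<sigma> P Q :: cmat
  assumes c: "M \<in> carrier_mat N N" "\<sigma> \<in> carrier_mat N N" "P \<in> carrier_mat N N" "Q \<in> carrier_mat N N"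
  shows "TT M \<sigma> P (k \<cdot>\<^sub>m Q) = k * TT M \<sigma> P Q"
proof -
  have "P * M * (k \<cdot>\<^sub>m Q) = k \<cdot>\<^sub>m (P * M * Q)" by (rule mult_smult_distrib) (use c in auto)
  hence "P * M * (k \<cdot>\<^sub>m Q) * \<sigma> = k \<cdot>\<^sub>m (P * M * Q * \<sigma>)"
    using c by (simp add: mult_smult_assoc_mat[of _ N N _ N])
  then show ?thesis unfolding TT_def using c by (simp add: mtrace_smult[of _ N])
qed

lemma trace_cs:
  fixes \<sigma> S \<tau> M C :: cmat
  assumes C: "C \<in> carrier_mat N N" and sig: "\<sigma> = mat_adjoint C * C"
    and S: "S \<in> carrier_mat N N" "mat_adjoint S = S" "S * \<sigma> = 1\<^sub>m N" "\<sigma> * S = 1\<^sub>m N"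
    and tau: "\<tau> \<in> carrier_mat N N" "mat_adjoint \<tau> = \<tau>"
    and M: "psd_op N M"
  shows "(Re (mtrace (\<tau> * M)))\<^sup>2 \<le> Re (mtrace (\<sigma> * M)) * Re (mtrace (\<tau> * S * \<tau> * M))"
proof -
  have Mc: "M \<in> carrier_mat N N" using M by (simp add: psd_op_def)
  have sc: "\<sigma> \<in> carrier_mat N N" using C sig by simp
  define Y where "Y = \<tau> * S"
  have Yc: "Y \<in> carrier_mat N N" using tau S by (simp add: Y_def)
  have Ya: "mat_adjoint Y = S * \<tau>" using adj_mult[OF tau(1) S(1)] S tau by (simp add: Y_def)
  have Yac: "S * \<tau> \<in> carrier_mat N N" using tau S by simp
  have pos: "0 \<le> Re (TT M \<sigma> (mat_adjoint Z) Z)" if Zc: "Z \<in> carrier_mat N N" for Z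
  proof -
    have "TT M \<sigma> (mat_adjoint Z) Z = mtrace ((mat_adjoint Z * M * Z * mat_adjoint C) * C)"
      unfolding TT_def sig using Zc Mc C by (simp add: assoc_mult_mat[of _ N N _ N _ N])
    also have "\<dots> = mtrace (C * (mat_adjoint Z * M * Z * mat_adjoint C))"
      by (rule mtrace_mult_comm[of _ N N]) (use Zc Mc C in auto)
    also have "C * (mat_adjoint Z * M * Z * mat_adjoint C) = mat_adjoint (Z * mat_adjoint C) * M * (Z * mat_adjoint C)"
      using Zc Mc C by (simp add: adj_mult[of Z N N "mat_adjoint C" N] assoc_mult_mat[of _ N N _ N _ N])
    finally have "TT M \<sigma> (mat_adjoint Z) Z = mtrace (mat_adjoint (Z * mat_adjoint C) * M * (Z * mat_adjoint C))" .
    moreover have "0 \<le> Re (mtrace (mat_adjoint (Z * mat_adjoint C) * M * (Z * mat_adjoint C)))"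
      by (rule trace_adj_psd[OF M]) (use Zc C in auto)
    ultimately show ?thesis by simp
  qed
  have t11: "TT M \<sigma> (1\<^sub>m N) (1\<^sub>m N) = mtrace (\<sigma> * M)"
    unfolding TT_def using Mc sc by (simp add: mtrace_mult_comm[of M N N \<sigma>])
  have t12: "TT M \<sigma> (1\<^sub>m N) Y = mtrace (\<tau> * M)"
  proof -
    have "1\<^sub>m N * M * Y * \<sigma> = M * \<tau>" unfolding Y_def using Mc tau S sc
      by (simp add: assoc_mult_mat[of _ N N _ N _ N])
    then show ?thesis unfolding TT_def using Mc tau by (simp add: mtrace_mult_comm[of M N N \<tau>])
  qed
  have t21: "TT M \<sigma> (mat_adjoint Y) (1\<^sub>m N) = mtrace (\<tau> * M)"
  proof -
    have "mat_adjoint Y * M * 1\<^sub>m N * \<sigma> = S * (\<tau> * M * \<sigma>)" unfolding Ya using Mc tau S sc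
      by (simp add: assoc_mult_mat[of _ N N _ N _ N])
    hence "TT M \<sigma> (mat_adjoint Y) (1\<^sub>m N) = mtrace ((\<tau> * M * \<sigma>) * S)"
      unfolding TT_def using Mc tau S sc by (simp add: mtrace_mult_comm[of S N N])
    also have "(\<tau> * M * \<sigma>) * S = \<tau> * M" using Mc tau S sc by (simp add: assoc_mult_mat[of _ N N _ N _ N])
    finally show ?thesis by simp
  qed
  have t22: "TT M \<sigma> (mat_adjoint Y) Y = mtrace (\<tau> * S * \<tau> * M)"
  proof -
    have "mat_adjoint Y * M * Y * \<sigma> = S * (\<tau> * M * \<tau>)" unfolding Ya using Mc tau S sc
      by (simp add: assoc_mult_mat[of _ N N _ N _ N] Y_def)
    hence "TT M \<sigma> (mat_adjoint Y) Y = mtrace ((\<tau> * M * \<tau>) * S)"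
      unfolding TT_def using Mc tau S sc by (simp add: mtrace_mult_comm[of S N N])
    also have "(\<tau> * M * \<tau>) * S = (\<tau> * M) * (\<tau> * S)" using Mc tau S by (simp add: assoc_mult_mat[of _ N N _ N _ N])
    also have "mtrace ((\<tau> * M) * (\<tau> * S)) = mtrace ((\<tau> * S) * (\<tau> * M))"
      by (rule mtrace_mult_comm[of _ N N]) (use Mc tau S in auto)
    also have "(\<tau> * S) * (\<tau> * M) = \<tau> * S * \<tau> * M" using Mc tau S by (simp add: assoc_mult_mat[of _ N N _ N _ N])
    finally show ?thesis .
  qed
  have key: "0 \<le> Re (mtrace (\<sigma> * M)) + 2 * t * Re (mtrace (\<tau> * M)) + t\<^sup>2 * Re (mtrace (\<tau> * S * \<tau> * M))" for t :: real
  proof -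
    define Z where "Z = 1\<^sub>m N + complex_of_real t \<cdot>\<^sub>m Y"
    have Zc: "Z \<in> carrier_mat N N" using Yc by (simp add: Z_def)
    have Za: "mat_adjoint Z = 1\<^sub>m N + complex_of_real t \<cdot>\<^sub>m mat_adjoint Y"
      unfolding Z_def using Yc by (simp add: adj_add[of _ N N] adj_smult)
    have "TT M \<sigma> (mat_adjoint Z) Z = TT M \<sigma> (1\<^sub>m N) (1\<^sub>m N) + of_real t * TT M \<sigma> (1\<^sub>m N) Y
       + of_real t * (TT M \<sigma> (mat_adjoint Y) (1\<^sub>m N) + of_real t * TT M \<sigma> (mat_adjoint Y) Y)"
      unfolding Za using Mc sc Yc
      by (simp add: Z_def TT_add1[of _ N] TT_add2[of _ N] TT_smult1[of _ N] TT_smult2[of _ N] algebra_simps)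
    also have "\<dots> = mtrace (\<sigma> * M) + of_real t * mtrace (\<tau> * M) + of_real t * (mtrace (\<tau> * M) + of_real t * mtrace (\<tau> * S * \<tau> * M))"
      by (simp only: t11 t12 t21 t22)
    finally have "Re (TT M \<sigma> (mat_adjoint Z) Z) = Re (mtrace (\<sigma> * M)) + 2 * t * Re (mtrace (\<tau> * M)) + t\<^sup>2 * Re (mtrace (\<tau> * S * \<tau> * M))"
      by (simp add: algebra_simps power2_eq_square)
    then show ?thesis using pos[OF Zc] by simp
  qed
  show ?thesis by (rule quad_disc) (rule key)
qed


lemma trace_prod_entries: fixes X Y :: cmat
  assumes "X \<in> carrier_mat N N" "Y \<in> carrier_mat N N"
  shows "mtrace (X * Y) = (\<Sum>i<N. \<Sum>j<N. X $$ (i,j) * Y $$ (j,i))"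
  using assms by (simp add: mtrace_def mult_entry del: index_mult_mat add: index_mult_mat(2,3))

lemma sum3_swap: "(\<Sum>k<n. \<Sum>i<N. \<Sum>j<N. (a i j :: complex) * m k i j) = (\<Sum>i<N. \<Sum>j<N. a i j * (\<Sum>k<n. m k i j))"
proof -
  have "(\<Sum>k<n. \<Sum>i<N. \<Sum>j<N. a i j * m k i j) = (\<Sum>i<N. \<Sum>k<n. \<Sum>j<N. a i j * m k i j)" by (rule sum.swap)
  also have "\<dots> = (\<Sum>i<N. \<Sum>j<N. \<Sum>k<n. a i j * m k i j)" by (rule sum.cong[OF refl], rule sum.swap)
  finally show ?thesis by (simp add: sum_distrib_left)
qed

lemma sigma_borel: "sigma_algebra (UNIV :: real set) (sets borel)"
  using sets.sigma_algebra_axioms[of "borel :: real measure"] by simp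

lemma outcome_measure:
  fixes X C :: cmat and Mm :: "real set \<Rightarrow> cmat"
  assumes C: "C \<in> carrier_mat N N" and X: "X = mat_adjoint C * C" and P: "is_povm N Mm"
  shows "sets (outcome_dist X Mm) = sets borel"
    and "space (outcome_dist X Mm) = UNIV"
    and "\<And>A. A \<in> sets borel \<Longrightarrow> 0 \<le> Re (mtrace (X * Mm A))"
    and "\<And>A. A \<in> sets borel \<Longrightarrow> emeasure (outcome_dist X Mm) A = ennreal (Re (mtrace (X * Mm A)))"
    and "\<And>A. A \<in> sets borel \<Longrightarrow> measure (outcome_dist X Mm) A = Re (mtrace (X * Mm A))"
    and "finite_measure (outcome_dist X Mm)"
proof -
  have Xc: "X \<in> carrier_mat N N" using C X by simp
  have Mc: "Mm A \<in> carrier_mat N N" if "A \<in> sets borel" for A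
    using P that by (auto simp: is_povm_def psd_op_def)
  show sets: "sets (outcome_dist X Mm) = sets borel"
    unfolding outcome_dist_def by (rule sigma_algebra.sets_measure_of_eq[OF sigma_borel])
  show "space (outcome_dist X Mm) = UNIV"
    unfolding outcome_dist_def by (rule space_measure_of_conv)
  show pos: "0 \<le> Re (mtrace (X * Mm A))" if A: "A \<in> sets borel" for A
  proof -
    have psdA: "psd_op N (Mm A)" using P A by (simp add: is_povm_def)
    have "X * Mm A = mat_adjoint C * (C * Mm A)" using X C Mc[OF A] by (simp add: assoc_mult_mat[of _ N N _ N _ N])
    hence "mtrace (X * Mm A) = mtrace ((C * Mm A) * mat_adjoint C)"
      using C Mc[OF A] by (simp add: mtrace_mult_comm[of "mat_adjoint C" N N])
    also have "(C * Mm A) * mat_adjoint C = mat_adjoint (mat_adjoint C) * Mm A * mat_adjoint C" by simp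
    finally show ?thesis using trace_adj_psd[OF psdA, of "mat_adjoint C" N] C by simp
  qed
  define mu where "mu A = ennreal (Re (mtrace (X * Mm A)))" for A
  have empty: "Mm {} $$ (i,j) = 0" if "i < N" "j < N" for i j
  proof -
    define c where "c = Mm {} $$ (i,j)"
    have "(\<lambda>n. \<Sum>k<n. Mm ((\<lambda>_. {}) k) $$ (i, j)) \<longlonglongrightarrow> Mm (\<Union>k. (\<lambda>_. {}) k) $$ (i, j)"
      using P that unfolding is_povm_def by (auto simp: disjoint_family_on_def)
    hence l: "(\<lambda>n. of_nat n * c) \<longlonglongrightarrow> c" by (simp add: c_def)
    have "(\<lambda>n. of_nat (Suc n) * c - of_nat n * c) \<longlonglongrightarrow> c - c"
      by (intro tendsto_diff l LIMSEQ_Suc[OF l])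
    hence "(\<lambda>n. c) \<longlonglongrightarrow> 0" by (simp add: algebra_simps)
    then show ?thesis using LIMSEQ_unique[OF tendsto_const] c_def by metis
  qed
  have mu_empty: "mu {} = 0"
  proof -
    have "mtrace (X * Mm {}) = (\<Sum>i<N. \<Sum>j<N. X $$ (i,j) * Mm {} $$ (j,i))"
      by (rule trace_prod_entries[OF Xc Mc]) simp
    also have "\<dots> = 0" by (simp add: empty)
    finally show ?thesis by (simp add: mu_def)
  qed
  have ca: "countably_additive (sets borel) mu"
    unfolding countably_additive_def
  proof (intro allI impI)
    fix F :: "nat \<Rightarrow> real set"
    assume F: "range F \<subseteq> sets borel" "disjoint_family F" "\<Union> (range F) \<in> sets borel"
    have Fk: "F k \<in> sets borel" for k using F(1) by auto
    have conv: "(\<lambda>n. \<Sum>k<n. Mm (F k) $$ (j, i)) \<longlonglongrightarrow> Mm (\<Union>k. F k) $$ (j, i)" if "i < N" "j < N" for i j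
      using P F that unfolding is_povm_def by blast
    define r where "r k = Re (mtrace (X * Mm (F k)))" for k
    have r0: "r k \<ge> 0" for k unfolding r_def by (rule pos[OF Fk])
    have ps: "(\<Sum>k<n. mtrace (X * Mm (F k))) = (\<Sum>i<N. \<Sum>j<N. X $$ (i,j) * (\<Sum>k<n. Mm (F k) $$ (j,i)))" for n
    proof -
      have "(\<Sum>k<n. mtrace (X * Mm (F k))) = (\<Sum>k<n. \<Sum>i<N. \<Sum>j<N. X $$ (i,j) * Mm (F k) $$ (j,i))"
        by (intro sum.cong refl trace_prod_entries[OF Xc Mc[OF Fk]])
      also have "\<dots> = (\<Sum>i<N. \<Sum>j<N. X $$ (i,j) * (\<Sum>k<n. Mm (F k) $$ (j,i)))"
        by (rule sum3_swap)
      finally show ?thesis .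
    qed
    have "(\<lambda>n. \<Sum>i<N. \<Sum>j<N. X $$ (i,j) * (\<Sum>k<n. Mm (F k) $$ (j,i))) \<longlonglongrightarrow> (\<Sum>i<N. \<Sum>j<N. X $$ (i,j) * Mm (\<Union>k. F k) $$ (j,i))"
      by (intro tendsto_sum tendsto_mult tendsto_const conv) auto
    also have "(\<Sum>i<N. \<Sum>j<N. X $$ (i,j) * Mm (\<Union>k. F k) $$ (j,i)) = mtrace (X * Mm (\<Union>k. F k))"
      by (rule trace_prod_entries[OF Xc Mc, symmetric]) (use F(3) in simp)
    finally have "(\<lambda>n. \<Sum>k<n. mtrace (X * Mm (F k))) \<longlonglongrightarrow> mtrace (X * Mm (\<Union>k. F k))"
      unfolding ps .
    hence "(\<lambda>n. Re (\<Sum>k<n. mtrace (X * Mm (F k)))) \<longlonglongrightarrow> Re (mtrace (X * Mm (\<Union>k. F k)))"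
      by (rule tendsto_Re)
    hence sums: "r sums Re (mtrace (X * Mm (\<Union>k. F k)))"
      unfolding sums_def r_def by simp
    have "(\<Sum>k. mu (F k)) = (\<Sum>k. ennreal (r k))" by (simp add: mu_def r_def)
    also have "\<dots> = ennreal (\<Sum>k. r k)" using r0 sums_summable[OF sums] by (rule suminf_ennreal2)
    also have "(\<Sum>k. r k) = Re (mtrace (X * Mm (\<Union>k. F k)))" using sums by (rule sums_unique[symmetric])
    finally show "(\<Sum>k. mu (F k)) = mu (\<Union> (range F))" by (simp add: mu_def)
  qed
  show em: "emeasure (outcome_dist X Mm) A = ennreal (Re (mtrace (X * Mm A)))" if A: "A \<in> sets borel" for A
  proof -
    have "emeasure (measure_of UNIV (sets borel) mu) A = mu A"
      by (rule emeasure_measure_of_sigma[OF sigma_borel _ ca A]) (simp add: positive_def mu_empty)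
    then show ?thesis by (simp add: outcome_dist_def mu_def[abs_def])
  qed
  show "measure (outcome_dist X Mm) A = Re (mtrace (X * Mm A))" if A: "A \<in> sets borel" for A
    using em[OF A] pos[OF A] by (simp add: measure_def)
  show "finite_measure (outcome_dist X Mm)"
  proof (rule finite_measureI)
    have "space (outcome_dist X Mm) = UNIV" unfolding outcome_dist_def by (rule space_measure_of_conv)
    then show "emeasure (outcome_dist X Mm) (space (outcome_dist X Mm)) \<noteq> \<infinity>"
      using em[of UNIV] by simp
  qed
qed


lemma cell_ineq:
  fixes v p q nu l :: real
  assumes l: "l > 0" and p: "p \<ge> 0" and nu: "nu \<ge> 0" and cs: "q\<^sup>2 \<le> p * nu"
  shows "v * (q - p) \<le> l / 2 * (v\<^sup>2 * p) + (nu - 2 * q + p) / (2 * l)"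
proof (cases "p = 0")
  case True
  then have "q = 0" using cs by simp
  then show ?thesis using True l nu by simp
next
  case False
  hence pp: "p > 0" using p by simp
  have "0 \<le> (l * v * p - (q - p))\<^sup>2" by simp
  hence "2 * l * p * (v * (q - p)) \<le> l\<^sup>2 * v\<^sup>2 * p\<^sup>2 + (q - p)\<^sup>2"
    by (simp add: power2_eq_square algebra_simps)
  also have "(q - p)\<^sup>2 \<le> p * nu - 2 * q * p + p\<^sup>2" using cs by (simp add: power2_eq_square algebra_simps)
  finally have h: "2 * l * p * (v * (q - p)) \<le> l\<^sup>2 * v\<^sup>2 * p\<^sup>2 + (p * nu - 2 * q * p + p\<^sup>2)" by simp
  have "2 * l * p * (l / 2 * (v\<^sup>2 * p) + (nu - 2 * q + p) / (2 * l)) = l\<^sup>2 * v\<^sup>2 * p\<^sup>2 + (p * nu - 2 * q * p + p\<^sup>2)"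
    using l by (simp add: field_simps power2_eq_square)
  with h have "2 * l * p * (v * (q - p)) \<le> 2 * l * p * (l / 2 * (v\<^sup>2 * p) + (nu - 2 * q + p) / (2 * l))" by simp
  then show ?thesis using l pp by (simp add: mult_le_cancel_left_pos)
qed

lemma cell_ineq_abs:
  fixes v p q nu l :: real
  assumes l: "l > 0" and p: "p \<ge> 0" and nu: "nu \<ge> 0" and cs: "q\<^sup>2 \<le> p * nu"
  shows "\<bar>v * (q - p)\<bar> \<le> l / 2 * (v\<^sup>2 * p) + (nu - 2 * q + p) / (2 * l)"
  using cell_ineq[OF assms, of v] cell_ineq[OF assms, of "-v"] by simp

lemma cell_ineq2:
  fixes v p q nu :: real
  assumes p: "p \<ge> 0" and q: "q \<ge> 0" and nu: "nu \<ge> 0" and cs: "q\<^sup>2 \<le> p * nu"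
  shows "\<bar>v\<bar> * q \<le> v\<^sup>2 * p / 2 + nu / 2"
proof (cases "p = 0")
  case True
  then have "q = 0" using cs by simp
  then show ?thesis using True nu by simp
next
  case False
  hence pp: "p > 0" using p by simp
  have "0 \<le> (\<bar>v\<bar> * p - q)\<^sup>2" by simp
  hence "2 * p * (\<bar>v\<bar> * q) \<le> v\<^sup>2 * p\<^sup>2 + q\<^sup>2"
    by (simp add: power2_eq_square algebra_simps)
  also have "\<dots> \<le> v\<^sup>2 * p\<^sup>2 + p * nu" using cs by simp
  also have "\<dots> = 2 * p * (v\<^sup>2 * p / 2 + nu / 2)" by (simp add: field_simps power2_eq_square)
  finally show ?thesis using pp by (simp add: mult_le_cancel_left_pos)
qed

lemma space_borelish: "sets M = sets (borel :: real measure) \<Longrightarrow> space M = UNIV"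
  by (metis sets_eq_imp_space_eq space_borel)

lemma simple_integral_sum:
  fixes M :: "real measure" and s :: "real \<Rightarrow> real" and h :: "real \<Rightarrow> real"
  assumes sM: "sets M = sets borel" and fM: "finite_measure M" and s: "simple_function borel s"
  shows "(\<integral>x. h (s x) \<partial>M) = (\<Sum>v\<in>s ` UNIV. h v * measure M (s -` {v}))"
proof -
  interpret finite_measure M by (rule fM)
  have sp: "space M = UNIV" by (rule space_borelish[OF sM])
  have fin: "finite (s ` UNIV)" using simple_functionD(1)[OF s] by simp
  have meas: "s -` {v} \<in> sets M" for v
    using simple_functionD(2)[OF s, of "{v}"] sM by simp
  have pw: "h (s x) = (\<Sum>v\<in>s ` UNIV. h v * indicator (s -` {v}) x)" for x
  proof -
    have "(\<Sum>v\<in>s ` UNIV. h v * indicator (s -` {v}) x) = (\<Sum>v\<in>s ` UNIV. if v = s x then h v else 0)"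
      by (intro sum.cong refl) (auto simp: indicator_def)
    also have "\<dots> = h (s x)" using fin by (simp add: sum.delta')
    finally show ?thesis by simp
  qed
  have "(\<integral>x. h (s x) \<partial>M) = (\<integral>x. (\<Sum>v\<in>s ` UNIV. h v * indicator (s -` {v}) x) \<partial>M)"
    by (simp add: pw[symmetric])
  also have "\<dots> = (\<Sum>v\<in>s ` UNIV. (\<integral>x. h v * indicator (s -` {v}) x \<partial>M))"
    by (rule Bochner_Integration.integral_sum[where f = "\<lambda>v x. h v * indicator (s -` {v}) x"])
       (auto intro!: integrable_mult_right integrable_indicator simp: meas less_top[symmetric])
  also have "\<dots> = (\<Sum>v\<in>s ` UNIV. h v * measure M (s -` {v}))"
    using sp by (simp add: meas)
  finally show ?thesis .
qed


lemma simple_hcr: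
  fixes P Q Nu :: "real measure" and s :: "real \<Rightarrow> real" and l :: real
  assumes sP: "sets P = sets borel" and sQ: "sets Q = sets borel" and sN: "sets Nu = sets borel"
    and pP: "prob_space P" and pQ: "prob_space Q" and fN: "finite_measure Nu"
    and cs: "\<And>A. A \<in> sets borel \<Longrightarrow> (measure Q A)\<^sup>2 \<le> measure P A * measure Nu A"
    and s: "simple_function borel s" and l: "l > 0"
  shows "\<bar>(\<integral>x. s x \<partial>Q) - (\<integral>x. s x \<partial>P)\<bar> \<le> l / 2 * (\<integral>x. (s x)\<^sup>2 \<partial>P) + (measure Nu UNIV - 1) / (2 * l)"
    and "(\<integral>x. \<bar>s x\<bar> \<partial>Q) \<le> (\<integral>x. (s x)\<^sup>2 \<partial>P) / 2 + measure Nu UNIV / 2"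
proof -
  have fP: "finite_measure P" using pP by (simp add: prob_space_def)
  have fQ: "finite_measure Q" using pQ by (simp add: prob_space_def)
  define R where "R = s ` UNIV"
  define p where "p v = measure P (s -` {v})" for v
  define q where "q v = measure Q (s -` {v})" for v
  define nu where "nu v = measure Nu (s -` {v})" for v
  have meas: "s -` {v} \<in> sets borel" for v using simple_functionD(2)[OF s, of "{v}"] by simp
  have csv: "(q v)\<^sup>2 \<le> p v * nu v" for v unfolding p_def q_def nu_def by (rule cs[OF meas])
  have p0: "p v \<ge> 0" "q v \<ge> 0" "nu v \<ge> 0" for v by (simp_all add: p_def q_def nu_def)
  have intsum: "\<And>M h. sets M = sets borel \<Longrightarrow> finite_measure M \<Longrightarrow>
      (\<integral>x. h (s x) \<partial>M) = (\<Sum>v\<in>R. h v * measure M (s -` {v}))"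
    unfolding R_def by (rule simple_integral_sum[OF _ _ s])
  have one: "(\<Sum>v\<in>R. p v) = 1" "(\<Sum>v\<in>R. q v) = 1" "(\<Sum>v\<in>R. nu v) = measure Nu UNIV"
  proof -
    have "(\<integral>x. (\<lambda>_. 1) (s x) \<partial>P) = (\<Sum>v\<in>R. 1 * p v)" unfolding p_def by (rule intsum[OF sP fP])
    moreover have "(\<integral>x. (\<lambda>_. 1::real) (s x) \<partial>P) = 1"
      using prob_space.prob_space[OF pP] by simp
    ultimately show "(\<Sum>v\<in>R. p v) = 1" by simp
    have "(\<integral>x. (\<lambda>_. 1) (s x) \<partial>Q) = (\<Sum>v\<in>R. 1 * q v)" unfolding q_def by (rule intsum[OF sQ fQ])
    moreover have "(\<integral>x. (\<lambda>_. 1::real) (s x) \<partial>Q) = 1"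
      using prob_space.prob_space[OF pQ] by simp
    ultimately show "(\<Sum>v\<in>R. q v) = 1" by simp
    have "(\<integral>x. (\<lambda>_. 1) (s x) \<partial>Nu) = (\<Sum>v\<in>R. 1 * nu v)" unfolding nu_def by (rule intsum[OF sN fN])
    moreover have "(\<integral>x. (\<lambda>_. 1::real) (s x) \<partial>Nu) = measure Nu UNIV"
      using space_borelish[OF sN] by simp
    ultimately show "(\<Sum>v\<in>R. nu v) = measure Nu UNIV" by simp
  qed
  have iQ: "(\<integral>x. s x \<partial>Q) = (\<Sum>v\<in>R. v * q v)" unfolding q_def using intsum[OF sQ fQ, of "\<lambda>v. v"] by simp
  have iP: "(\<integral>x. s x \<partial>P) = (\<Sum>v\<in>R. v * p v)" unfolding p_def using intsum[OF sP fP, of "\<lambda>v. v"] by simp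
  have iP2: "(\<integral>x. (s x)\<^sup>2 \<partial>P) = (\<Sum>v\<in>R. v\<^sup>2 * p v)" unfolding p_def using intsum[OF sP fP, of "\<lambda>v. v\<^sup>2"] by simp
  have iQa: "(\<integral>x. \<bar>s x\<bar> \<partial>Q) = (\<Sum>v\<in>R. \<bar>v\<bar> * q v)" unfolding q_def using intsum[OF sQ fQ, of "\<lambda>v. \<bar>v\<bar>"] by simp
  have "\<bar>(\<integral>x. s x \<partial>Q) - (\<integral>x. s x \<partial>P)\<bar> = \<bar>\<Sum>v\<in>R. v * (q v - p v)\<bar>"
    unfolding iQ iP by (simp add: sum_subtractf algebra_simps)
  also have "\<dots> \<le> (\<Sum>v\<in>R. \<bar>v * (q v - p v)\<bar>)" by (rule sum_abs)
  also have "\<dots> \<le> (\<Sum>v\<in>R. l / 2 * (v\<^sup>2 * p v) + (nu v - 2 * q v + p v) / (2 * l))"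
    by (intro sum_mono cell_ineq_abs[OF l p0(1) p0(3) csv])
  also have "\<dots> = l / 2 * (\<Sum>v\<in>R. v\<^sup>2 * p v) + ((\<Sum>v\<in>R. nu v) - 2 * (\<Sum>v\<in>R. q v) + (\<Sum>v\<in>R. p v)) / (2 * l)"
    by (simp add: sum.distrib sum_distrib_left sum_divide_distrib[symmetric] sum_subtractf)
  also have "\<dots> = l / 2 * (\<integral>x. (s x)\<^sup>2 \<partial>P) + (measure Nu UNIV - 1) / (2 * l)"
    unfolding one iP2 by simp
  finally show "\<bar>(\<integral>x. s x \<partial>Q) - (\<integral>x. s x \<partial>P)\<bar> \<le> l / 2 * (\<integral>x. (s x)\<^sup>2 \<partial>P) + (measure Nu UNIV - 1) / (2 * l)" .
  have "(\<integral>x. \<bar>s x\<bar> \<partial>Q) \<le> (\<Sum>v\<in>R. v\<^sup>2 * p v / 2 + nu v / 2)"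
    unfolding iQa by (intro sum_mono cell_ineq2[OF p0 csv])
  also have "\<dots> = (\<integral>x. (s x)\<^sup>2 \<partial>P) / 2 + measure Nu UNIV / 2"
    unfolding iP2 one(3)[symmetric] by (simp add: sum.distrib sum_divide_distrib)
  finally show "(\<integral>x. \<bar>s x\<bar> \<partial>Q) \<le> (\<integral>x. (s x)\<^sup>2 \<partial>P) / 2 + measure Nu UNIV / 2" .
qed


lemma simple_hcr_abs:
  fixes P Q Nu :: "real measure" and s :: "real \<Rightarrow> real"
  assumes sP: "sets P = sets borel" and sQ: "sets Q = sets borel" and sN: "sets Nu = sets borel"
    and pP: "prob_space P" and pQ: "prob_space Q" and fN: "finite_measure Nu"
    and cs: "\<And>A. A \<in> sets borel \<Longrightarrow> (measure Q A)\<^sup>2 \<le> measure P A * measure Nu A"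
    and s: "simple_function borel s"
  shows "(\<integral>x. \<bar>s x\<bar> \<partial>Q) \<le> (\<integral>x. (s x)\<^sup>2 \<partial>P) / 2 + measure Nu UNIV / 2"
proof -
  have l1: "(1::real) > 0" by simp
  show ?thesis by (rule simple_hcr(2)[OF sP sQ sN pP pQ fN cs s l1])
qed

lemma meas_borelish:
  fixes M :: "real measure" and g :: "real \<Rightarrow> real"
  assumes sM: "sets M = sets borel" and g: "g \<in> borel_measurable borel"
  shows "g \<in> borel_measurable M"
proof -
  have "measurable M (borel :: real measure) = measurable borel borel" by (rule measurable_cong_sets[OF sM refl])
  then show ?thesis using g by metis
qed

lemma simple_integrable:
  fixes M :: "real measure" and s :: "real \<Rightarrow> real"
  assumes sM: "sets M = sets borel" and fM: "finite_measure M" and s: "simple_function borel s"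
  shows "integrable M s"
proof -
  interpret finite_measure M by (rule fM)
  have fin: "finite (s ` UNIV)" using simple_functionD(1)[OF s] by simp
  have b: "norm (s x) \<le> (\<Sum>v\<in>s ` UNIV. \<bar>v\<bar>)" for x
    using member_le_sum[of "s x" "s ` UNIV" abs] fin by simp
  have m: "s \<in> borel_measurable M"
    by (rule meas_borelish[OF sM borel_measurable_simple_function[OF s]])
  show ?thesis by (rule integrable_const_bound[of s "\<Sum>v\<in>s ` UNIV. \<bar>v\<bar>"]) (use b m in auto)
qed

lemma hcr:
  fixes P Q Nu :: "real measure" and f :: "real \<Rightarrow> real"
  assumes sP: "sets P = sets borel" and sQ: "sets Q = sets borel" and sN: "sets Nu = sets borel"
    and pP: "prob_space P" and pQ: "prob_space Q" and fN: "finite_measure Nu"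
    and cs: "\<And>A. A \<in> sets borel \<Longrightarrow> (measure Q A)\<^sup>2 \<le> measure P A * measure Nu A"
    and fm: "f \<in> borel_measurable borel"
    and V: "(\<integral>\<^sup>+x. ennreal ((f x)\<^sup>2) \<partial>P) < \<infinity>"
  shows "integrable P f" "integrable Q f" "integrable P (\<lambda>x. (f x)\<^sup>2)"
    "(\<integral>\<^sup>+x. ennreal ((f x)\<^sup>2) \<partial>P) = ennreal (\<integral>x. (f x)\<^sup>2 \<partial>P)"
    "\<And>l. l > 0 \<Longrightarrow> \<bar>(\<integral>x. f x \<partial>Q) - (\<integral>x. f x \<partial>P)\<bar> \<le> l / 2 * (\<integral>x. (f x)\<^sup>2 \<partial>P) + (measure Nu UNIV - 1) / (2 * l)"
proof -
  have fP: "finite_measure P" using pP by (simp add: prob_space_def)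
  have fQ: "finite_measure Q" using pQ by (simp add: prob_space_def)
  have mP: "borel_measurable P = borel_measurable borel" by (rule measurable_cong_sets[OF sP refl])
  have mQ: "borel_measurable Q = borel_measurable borel" by (rule measurable_cong_sets[OF sQ refl])
  have spP: "space P = UNIV" by (rule space_borelish[OF sP])
  have spQ: "space Q = UNIV" by (rule space_borelish[OF sQ])
  obtain F where F: "\<And>i. simple_function borel (F i)" "\<And>x. (\<lambda>i. F i x) \<longlonglongrightarrow> f x"
    "\<And>i x. \<bar>F i x\<bar> \<le> 2 * \<bar>f x\<bar>"
    using borel_measurable_implies_sequence_metric[OF fm, of 0] by (auto simp: dist_real_def)
  have Fm: "F i \<in> borel_measurable borel" for i by (rule borel_measurable_simple_function[OF F(1)])
  have f2m: "(\<lambda>x. (f x)\<^sup>2) \<in> borel_measurable borel" using fm by measurable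
  show i2P: "integrable P (\<lambda>x. (f x)\<^sup>2)"
    unfolding integrable_iff_bounded using V meas_borelish[OF sP f2m] by simp
  show iP: "integrable P f"
  proof (rule Bochner_Integration.integrable_bound[of P "\<lambda>x. 1 + (f x)\<^sup>2"])
    show "integrable P (\<lambda>x. 1 + (f x)\<^sup>2)"
      using i2P finite_measure.integrable_const[OF fP] by (intro Bochner_Integration.integrable_add) auto
    show "f \<in> borel_measurable P" by (rule meas_borelish[OF sP fm])
    have "\<bar>f x\<bar> \<le> 1 + (f x)\<^sup>2" for x
    proof -
      have "0 \<le> (\<bar>f x\<bar> - 1)\<^sup>2" by simp
      hence "2 * \<bar>f x\<bar> \<le> \<bar>f x\<bar>\<^sup>2 + 1" by (simp add: power2_eq_square algebra_simps)
      moreover have "\<bar>f x\<bar>\<^sup>2 = (f x)\<^sup>2" by simp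
      moreover have "0 \<le> (f x)\<^sup>2" by simp
      ultimately show ?thesis by linarith
    qed
    then show "AE x in P. norm (f x) \<le> norm (1 + (f x)\<^sup>2)" by auto
  qed
  define V' where "V' = (\<integral>x. (f x)\<^sup>2 \<partial>P)"
  define T where "T = measure Nu UNIV"
  have Fsq_int: "integrable P (\<lambda>x. (F i x)\<^sup>2)" for i
  proof -
    have "simple_function borel (\<lambda>x. (F i x)\<^sup>2)" using F(1) by (rule simple_function_compose1)
    then show ?thesis by (rule simple_integrable[OF sP fP])
  qed
  have Fsq_le: "(\<integral>x. (F i x)\<^sup>2 \<partial>P) \<le> 4 * V'" for i
  proof -
    have "(\<integral>x. (F i x)\<^sup>2 \<partial>P) \<le> (\<integral>x. 4 * (f x)\<^sup>2 \<partial>P)"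
    proof (rule integral_mono[OF Fsq_int])
      show "integrable P (\<lambda>x. 4 * (f x)\<^sup>2)" using i2P by simp
      fix x
      have "\<bar>F i x\<bar>\<^sup>2 \<le> (2 * \<bar>f x\<bar>)\<^sup>2" using F(3)[of i x] by (intro power_mono) auto
      then show "(F i x)\<^sup>2 \<le> 4 * (f x)\<^sup>2" by (simp add: power_mult_distrib)
    qed
    then show ?thesis by (simp add: V'_def)
  qed
  show iQ: "integrable Q f"
  proof -
    have lim: "(\<lambda>i. ennreal \<bar>F i x\<bar>) \<longlonglongrightarrow> ennreal \<bar>f x\<bar>" for x
      by (intro tendsto_ennrealI tendsto_rabs F(2))
    have "(\<integral>\<^sup>+x. ennreal \<bar>f x\<bar> \<partial>Q) = (\<integral>\<^sup>+x. liminf (\<lambda>i. ennreal \<bar>F i x\<bar>) \<partial>Q)"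
      using lim_imp_Liminf[OF trivial_limit_sequentially lim] by simp
    also have "\<dots> \<le> liminf (\<lambda>i. \<integral>\<^sup>+x. ennreal \<bar>F i x\<bar> \<partial>Q)"
      by (rule nn_integral_liminf) (use meas_borelish[OF sQ Fm] in measurable)
    also have "\<dots> \<le> ennreal (2 * V' + T / 2)"
    proof -
      have b: "(\<integral>\<^sup>+x. ennreal \<bar>F i x\<bar> \<partial>Q) \<le> ennreal (2 * V' + T / 2)" for i
      proof -
        have intF: "integrable Q (\<lambda>x. \<bar>F i x\<bar>)"
          using simple_integrable[OF sQ fQ F(1)[of i]] by simp
        have "(\<integral>\<^sup>+x. ennreal \<bar>F i x\<bar> \<partial>Q) = ennreal (\<integral>x. \<bar>F i x\<bar> \<partial>Q)"
          by (rule nn_integral_eq_integral[OF intF]) auto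
        also have "(\<integral>x. \<bar>F i x\<bar> \<partial>Q) \<le> (\<integral>x. (F i x)\<^sup>2 \<partial>P) / 2 + T / 2"
          unfolding T_def by (rule simple_hcr_abs[OF sP sQ sN pP pQ fN cs F(1)])
        also have "\<dots> \<le> 2 * V' + T / 2" using Fsq_le[of i] by simp
        finally show ?thesis by (simp add: ennreal_leI)
      qed
      have "liminf (\<lambda>i. \<integral>\<^sup>+x. ennreal \<bar>F i x\<bar> \<partial>Q) \<le> limsup (\<lambda>i. \<integral>\<^sup>+x. ennreal \<bar>F i x\<bar> \<partial>Q)"
        by (rule Liminf_le_Limsup) simp
      also have "\<dots> \<le> ennreal (2 * V' + T / 2)" by (rule Limsup_bounded) (use b in auto)
      finally show ?thesis .
    qed
    finally have "(\<integral>\<^sup>+x. ennreal \<bar>f x\<bar> \<partial>Q) < \<infinity>" using le_less_trans by fastforce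
    then show ?thesis unfolding integrable_iff_bounded using meas_borelish[OF sQ fm] by simp
  qed
  show "(\<integral>\<^sup>+x. ennreal ((f x)\<^sup>2) \<partial>P) = ennreal (\<integral>x. (f x)\<^sup>2 \<partial>P)"
    by (rule nn_integral_eq_integral[OF i2P]) auto
  fix l :: real assume l: "l > 0"
  have cQ: "(\<lambda>i. \<integral>x. F i x \<partial>Q) \<longlonglongrightarrow> (\<integral>x. f x \<partial>Q)"
  proof (rule integral_dominated_convergence[of f Q F "\<lambda>x. 2 * \<bar>f x\<bar>"])
    show "integrable Q (\<lambda>x. 2 * \<bar>f x\<bar>)" using iQ by auto
  qed (use meas_borelish[OF sQ fm] meas_borelish[OF sQ Fm] F(2,3) in auto)
  have cP: "(\<lambda>i. \<integral>x. F i x \<partial>P) \<longlonglongrightarrow> (\<integral>x. f x \<partial>P)"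
  proof (rule integral_dominated_convergence[of f P F "\<lambda>x. 2 * \<bar>f x\<bar>"])
    show "integrable P (\<lambda>x. 2 * \<bar>f x\<bar>)" using iP by auto
  qed (use meas_borelish[OF sP fm] meas_borelish[OF sP Fm] F(2,3) in auto)
  have c2: "(\<lambda>i. \<integral>x. (F i x)\<^sup>2 \<partial>P) \<longlonglongrightarrow> (\<integral>x. (f x)\<^sup>2 \<partial>P)"
  proof (rule integral_dominated_convergence[of "\<lambda>x. (f x)\<^sup>2" P "\<lambda>i x. (F i x)\<^sup>2" "\<lambda>x. 4 * (f x)\<^sup>2"])
    show "integrable P (\<lambda>x. 4 * (f x)\<^sup>2)" using i2P by auto
    show "(\<lambda>x. (f x)\<^sup>2) \<in> borel_measurable P" by (rule meas_borelish[OF sP f2m])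
    show "(\<lambda>x. (F i x)\<^sup>2) \<in> borel_measurable P" for i
      by (rule meas_borelish[OF sP]) (use Fm[of i] in measurable)
    show "AE x in P. (\<lambda>i. (F i x)\<^sup>2) \<longlonglongrightarrow> (f x)\<^sup>2" by (intro AE_I2 tendsto_power F(2))
    show "AE x in P. norm ((F i x)\<^sup>2) \<le> 4 * (f x)\<^sup>2" for i
    proof (intro AE_I2)
      fix x
      have "\<bar>F i x\<bar>\<^sup>2 \<le> (2 * \<bar>f x\<bar>)\<^sup>2" using F(3)[of i x] by (intro power_mono) auto
      then show "norm ((F i x)\<^sup>2) \<le> 4 * (f x)\<^sup>2" by (simp add: power_mult_distrib)
    qed
  qed
  show "\<bar>(\<integral>x. f x \<partial>Q) - (\<integral>x. f x \<partial>P)\<bar> \<le> l / 2 * (\<integral>x. (f x)\<^sup>2 \<partial>P) + (measure Nu UNIV - 1) / (2 * l)"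
  proof (rule LIMSEQ_le)
    show "(\<lambda>i. \<bar>(\<integral>x. F i x \<partial>Q) - (\<integral>x. F i x \<partial>P)\<bar>) \<longlonglongrightarrow> \<bar>(\<integral>x. f x \<partial>Q) - (\<integral>x. f x \<partial>P)\<bar>"
      by (intro tendsto_rabs tendsto_diff cQ cP)
    show "(\<lambda>i. l / 2 * (\<integral>x. (F i x)\<^sup>2 \<partial>P) + (measure Nu UNIV - 1) / (2 * l)) \<longlonglongrightarrow> l / 2 * (\<integral>x. (f x)\<^sup>2 \<partial>P) + (measure Nu UNIV - 1) / (2 * l)"
      by (intro tendsto_add tendsto_mult tendsto_const c2)
    show "\<exists>N. \<forall>n\<ge>N. \<bar>(\<integral>x. F n x \<partial>Q) - (\<integral>x. F n x \<partial>P)\<bar> \<le> l / 2 * (\<integral>x. (F n x)\<^sup>2 \<partial>P) + (measure Nu UNIV - 1) / (2 * l)"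
      using simple_hcr(1)[OF sP sQ sN pP pQ fN cs F(1) l] by blast
  qed
qed


lemma tp_gram: fixes B :: cmat assumes "B \<in> carrier_mat d d"
  shows "tensor_pow (mat_adjoint B * B) n = mat_adjoint (tensor_pow B n) * tensor_pow B n"
  using tp_mult[OF adj_carrier[OF assms] assms, of n] by (simp add: tp_adj)

lemma abs_lb: fixes x y D :: real
  assumes "\<bar>x\<bar> \<le> \<bar>D\<bar> / 3" "\<bar>y\<bar> \<le> \<bar>D\<bar> / 3"
  shows "\<bar>D\<bar> / 3 \<le> \<bar>y + D - x\<bar>"
proof -
  have "\<bar>D\<bar> = \<bar>(y + D - x) + (x - y)\<bar>" by simp
  also have "\<dots> \<le> \<bar>y + D - x\<bar> + \<bar>x - y\<bar>" by (rule abs_triangle_ineq)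
  also have "\<bar>x - y\<bar> \<le> \<bar>x\<bar> + \<bar>y\<bar>" by (rule abs_triangle_ineq4)
  finally show ?thesis using assms by linarith
qed

lemma per_n:
  fixes \<rho>0 \<rho>1 S1 B0 B1 Bq :: cmat and Mn :: "real set \<Rightarrow> cmat" and a0 a1 K :: real
  assumes c: "\<rho>0 \<in> carrier_mat d d" "\<rho>1 \<in> carrier_mat d d" "S1 \<in> carrier_mat d d"
      "B0 \<in> carrier_mat d d" "B1 \<in> carrier_mat d d" "Bq \<in> carrier_mat d d"
    and g0: "\<rho>0 = mat_adjoint B0 * B0" and g1: "\<rho>1 = mat_adjoint B1 * B1"
    and gq: "\<rho>1 * S1 * \<rho>1 = mat_adjoint Bq * Bq"
    and inv: "S1 * \<rho>0 = 1\<^sub>m d" "\<rho>0 * S1 = 1\<^sub>m d"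
    and herm: "mat_adjoint S1 = S1" "mat_adjoint \<rho>1 = \<rho>1"
    and tr: "mtrace \<rho>0 = 1" "mtrace \<rho>1 = 1" "mtrace (\<rho>1 * S1 * \<rho>1) = of_real K"
    and K0: "K \<ge> 0"
    and povm: "is_povm (d ^ n) Mn" and n1: "n \<ge> 1"
    and b0: "\<bar>\<integral>\<gamma>. (\<gamma> - a0) \<partial>outcome_dist (tensor_pow \<rho>0 n) Mn\<bar> \<le> \<bar>a1 - a0\<bar> / 3"
    and b1: "\<bar>\<integral>\<gamma>. (\<gamma> - a1) \<partial>outcome_dist (tensor_pow \<rho>1 n) Mn\<bar> \<le> \<bar>a1 - a0\<bar> / 3"
    and ane: "a0 \<noteq> a1"
  shows "(\<integral>\<^sup>+\<gamma>. ennreal ((\<gamma> - a0)\<^sup>2) \<partial>outcome_dist (tensor_pow \<rho>0 n) Mn) = \<top> \<or>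
    (K > 0 \<and> (\<exists>V. (\<integral>\<^sup>+\<gamma>. ennreal ((\<gamma> - a0)\<^sup>2) \<partial>outcome_dist (tensor_pow \<rho>0 n) Mn) = ennreal V
        \<and> V \<ge> 3 / 4 * (\<bar>a1 - a0\<bar> / 3)\<^sup>2 / K ^ n))"
proof -
  define N where "N = d ^ n"
  define \<sigma> where "\<sigma> = tensor_pow \<rho>0 n"
  define \<tau> where "\<tau> = tensor_pow \<rho>1 n"
  define S where "S = tensor_pow S1 n"
  have sc: "\<sigma> \<in> carrier_mat N N" "\<tau> \<in> carrier_mat N N" "S \<in> carrier_mat N N"
    using c by (simp_all add: \<sigma>_def \<tau>_def S_def N_def)
  have C0: "tensor_pow B0 n \<in> carrier_mat N N" "\<sigma> = mat_adjoint (tensor_pow B0 n) * tensor_pow B0 n"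
    using c g0 by (simp_all add: N_def \<sigma>_def tp_gram)
  have C1: "tensor_pow B1 n \<in> carrier_mat N N" "\<tau> = mat_adjoint (tensor_pow B1 n) * tensor_pow B1 n"
    using c g1 by (simp_all add: N_def \<tau>_def tp_gram)
  have R: "\<tau> * S * \<tau> = tensor_pow (\<rho>1 * S1 * \<rho>1) n"
  proof -
    have "tensor_pow (\<rho>1 * S1 * \<rho>1) n = tensor_pow (\<rho>1 * S1) n * tensor_pow \<rho>1 n"
      by (rule tp_mult) (use c in auto)
    also have "tensor_pow (\<rho>1 * S1) n = tensor_pow \<rho>1 n * tensor_pow S1 n"
      by (rule tp_mult) (use c in auto)
    finally show ?thesis by (simp add: \<tau>_def S_def)
  qed
  have Cq: "tensor_pow Bq n \<in> carrier_mat N N" "\<tau> * S * \<tau> = mat_adjoint (tensor_pow Bq n) * tensor_pow Bq n"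
    using c gq R by (simp_all add: N_def tp_gram)
  have Sinv: "S * \<sigma> = 1\<^sub>m N" "\<sigma> * S = 1\<^sub>m N"
    using c inv by (simp_all add: S_def \<sigma>_def N_def tp_mult[of _ d, symmetric] tp_one)
  have Sh: "mat_adjoint S = S" "mat_adjoint \<tau> = \<tau>"
    using herm by (simp_all add: S_def \<tau>_def tp_adj[symmetric])
  have trs: "mtrace \<sigma> = 1" "mtrace \<tau> = 1" "mtrace (\<tau> * S * \<tau>) = of_real (K ^ n)"
    using c tr R by (simp_all add: \<sigma>_def \<tau>_def tp_trace[of _ d])
  have povmN: "is_povm N Mn" using povm by (simp add: N_def)
  define P where "P = outcome_dist \<sigma> Mn"
  define Q where "Q = outcome_dist \<tau> Mn"
  define Nu where "Nu = outcome_dist (\<tau> * S * \<tau>) Mn"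
  note oP = outcome_measure[OF C0 povmN, folded P_def]
  note oQ = outcome_measure[OF C1 povmN, folded Q_def]
  note oN = outcome_measure[OF Cq povmN, folded Nu_def]
  have M1: "Mn UNIV = 1\<^sub>m N" using povmN by (simp add: is_povm_def)
  have pP: "prob_space P"
  proof
    show "emeasure P (space P) = 1" using oP(2) oP(4)[of UNIV] M1 sc trs by simp
  qed
  have pQ: "prob_space Q"
  proof
    show "emeasure Q (space Q) = 1" using oQ(2) oQ(4)[of UNIV] M1 sc trs by simp
  qed
  have TN: "measure Nu UNIV = K ^ n"
    using oN(5)[of UNIV] M1 sc trs by simp
  have cs: "(measure Q A)\<^sup>2 \<le> measure P A * measure Nu A" if A: "A \<in> sets borel" for A
  proof -
    have psdA: "psd_op N (Mn A)" using povmN A by (simp add: is_povm_def)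
    show ?thesis using trace_cs[OF C0(1) C0(2) sc(3) Sh(1) Sinv sc(2) Sh(2) psdA]
      oP(5)[OF A] oQ(5)[OF A] oN(5)[OF A] by simp
  qed
  define f where "f \<gamma> = \<gamma> - a0" for \<gamma> :: real
  have fm: "f \<in> borel_measurable borel" unfolding f_def by measurable
  show ?thesis
  proof (cases "(\<integral>\<^sup>+\<gamma>. ennreal ((\<gamma> - a0)\<^sup>2) \<partial>P) = \<top>")
    case True
    then show ?thesis by (simp add: P_def \<sigma>_def)
  next
    case False
    hence Vfin: "(\<integral>\<^sup>+x. ennreal ((f x)\<^sup>2) \<partial>P) < \<infinity>" by (simp add: f_def top.not_eq_extremum)
    note H = hcr[OF oP(1) oQ(1) oN(1) pP pQ oN(6) cs fm Vfin]
    define V where "V = (\<integral>x. (f x)\<^sup>2 \<partial>P)"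
    define T where "T = K ^ n"
    define c0 where "c0 = \<bar>a1 - a0\<bar> / 3"
    have c0p: "c0 > 0" using ane by (simp add: c0_def)
    have V0: "V \<ge> 0" unfolding V_def by simp
    interpret qQ: prob_space Q by (rule pQ)
    have intQ: "(\<integral>x. f x \<partial>Q) = (\<integral>\<gamma>. (\<gamma> - a1) \<partial>Q) + (a1 - a0)"
    proof -
      have "(\<integral>\<gamma>. (\<gamma> - a1) \<partial>Q) = (\<integral>x. f x + (a0 - a1) \<partial>Q)" by (simp add: f_def)
      also have "\<dots> = (\<integral>x. f x \<partial>Q) + (a0 - a1)"
        using H(2) qQ.prob_space by (simp add: Bochner_Integration.integral_add)
      finally show ?thesis by simp
    qed
    have bP: "\<bar>\<integral>x. f x \<partial>P\<bar> \<le> c0" using b0 by (simp add: f_def P_def \<sigma>_def c0_def)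
    have bQ: "\<bar>\<integral>\<gamma>. (\<gamma> - a1) \<partial>Q\<bar> \<le> c0" using b1 by (simp add: Q_def \<tau>_def c0_def)
    have Dl: "c0 \<le> \<bar>(\<integral>x. f x \<partial>Q) - (\<integral>x. f x \<partial>P)\<bar>"
      unfolding intQ using abs_lb bP bQ unfolding c0_def by blast
    have key: "c0 \<le> l / 2 * V + (T - 1) / (2 * l)" if "l > 0" for l
    proof -
      have "\<bar>(\<integral>x. f x \<partial>Q) - (\<integral>x. f x \<partial>P)\<bar> \<le> l / 2 * (\<integral>x. (f x)\<^sup>2 \<partial>P) + (measure Nu UNIV - 1) / (2 * l)"
        using H(5) that by blast
      then show ?thesis using Dl by (simp add: V_def TN T_def)
    qed
    have T1: "T > 1"
    proof (rule ccontr)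
      assume "\<not> T > 1"
      define l where "l = c0 / (V + 1)"
      have lp: "l > 0" using c0p V0 by (simp add: l_def)
      have "c0 \<le> l / 2 * V + (T - 1) / (2 * l)" by (rule key[OF lp])
      also have "(T - 1) / (2 * l) \<le> 0" using \<open>\<not> T > 1\<close> lp by (simp add: divide_nonpos_pos)
      also have "l / 2 * V = c0 * V / (2 * (V + 1))" using V0 by (simp add: l_def)
      also have "c0 * V / (2 * (V + 1)) < c0"
      proof -
        have "c0 * V < c0 * (2 * (V + 1))" using c0p V0 by (intro mult_strict_left_mono) auto
        then show ?thesis using V0 by (simp add: divide_less_eq)
      qed
      finally show False by simp
    qed
    have Vb: "V \<ge> 3 / 4 * c0\<^sup>2 / T"
    proof -
      define l where "l = 2 * T / c0"
      have lp: "l > 0" using c0p T1 by (simp add: l_def)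
      have "c0 \<le> l / 2 * V + (T - 1) / (2 * l)" by (rule key[OF lp])
      also have "l / 2 * V = T * V / c0" using c0p by (simp add: l_def)
      also have "(T - 1) / (2 * l) = (T - 1) * c0 / (4 * T)" using c0p T1 by (simp add: l_def field_simps)
      also have "(T - 1) * c0 / (4 * T) \<le> c0 / 4" using c0p T1 by (simp add: field_simps)
      finally have "3 / 4 * c0 \<le> T * V / c0" by linarith
      hence "3 / 4 * c0 * c0 \<le> T * V" using c0p by (simp add: field_simps)
      then show ?thesis using T1 by (simp add: field_simps power2_eq_square)
    qed
    have Kp: "K > 0"
    proof (rule ccontr)
      assume "\<not> K > 0"
      hence "K = 0" using K0 by simp
      then show False using T1 n1 by (simp add: T_def power_0_left)
    qed
    have "(\<integral>\<^sup>+\<gamma>. ennreal ((\<gamma> - a0)\<^sup>2) \<partial>P) = ennreal V"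
      using H(4) by (simp add: V_def f_def)
    then show ?thesis using Vb Kp by (auto simp: P_def \<sigma>_def T_def c0_def)
  qed
qed


lemma J_identity:
  fixes \<rho>0 \<rho>1 S1 :: cmat and \<delta> :: real
  assumes c: "\<rho>0 \<in> carrier_mat d d" "\<rho>1 \<in> carrier_mat d d" "S1 \<in> carrier_mat d d"
    and inv: "S1 * \<rho>0 = 1\<^sub>m d" "\<rho>0 * S1 = 1\<^sub>m d"
    and herm: "mat_adjoint S1 = S1" "mat_adjoint \<rho>1 = \<rho>1" "mat_adjoint \<rho>0 = \<rho>0"
    and tr: "mtrace \<rho>0 = 1" "mtrace \<rho>1 = 1"
    and dnz: "\<delta> \<noteq> 0"
  shows "mtrace (\<rho>0 * (complex_of_real (1 / \<delta>) \<cdot>\<^sub>m (S1 * (\<rho>1 - \<rho>0))) *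
           mat_adjoint (complex_of_real (1 / \<delta>) \<cdot>\<^sub>m (S1 * (\<rho>1 - \<rho>0))))
         = complex_of_real (1 / \<delta>\<^sup>2) * (mtrace (\<rho>1 * S1 * \<rho>1) - 1)"
proof -
  define k where "k = complex_of_real (1 / \<delta>)"
  define D where "D = \<rho>1 - \<rho>0"
  have Dc: "D \<in> carrier_mat d d" unfolding D_def by (rule minus_carrier_mat[OF c(1)])
  have Dh: "mat_adjoint D = D" using c herm by (simp add: D_def adj_minus[of _ d d])
  have adjL: "mat_adjoint (k \<cdot>\<^sub>m (S1 * D)) = k \<cdot>\<^sub>m (D * S1)"
    using c Dc Dh herm by (simp add: adj_smult adj_mult[of _ d d _ d] k_def)
  have e1: "\<rho>0 * (k \<cdot>\<^sub>m (S1 * D)) = k \<cdot>\<^sub>m D"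
  proof -
    have "\<rho>0 * (k \<cdot>\<^sub>m (S1 * D)) = k \<cdot>\<^sub>m (\<rho>0 * (S1 * D))"
      by (rule mult_smult_distrib) (use c Dc in auto)
    also have "\<rho>0 * (S1 * D) = (\<rho>0 * S1) * D" using c Dc by (simp add: assoc_mult_mat[of _ d d _ d _ d])
    also have "\<dots> = D" using inv Dc by simp
    finally show ?thesis .
  qed
  have e2: "(k \<cdot>\<^sub>m D) * (k \<cdot>\<^sub>m (D * S1)) = (k * k) \<cdot>\<^sub>m (D * (D * S1))"
  proof -
    have "(k \<cdot>\<^sub>m D) * (k \<cdot>\<^sub>m (D * S1)) = k \<cdot>\<^sub>m (D * (k \<cdot>\<^sub>m (D * S1)))"
      by (rule mult_smult_assoc_mat) (use c Dc in auto)
    also have "D * (k \<cdot>\<^sub>m (D * S1)) = k \<cdot>\<^sub>m (D * (D * S1))"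
      by (rule mult_smult_distrib) (use c Dc in auto)
    also have "k \<cdot>\<^sub>m (k \<cdot>\<^sub>m (D * (D * S1))) = (k * k) \<cdot>\<^sub>m (D * (D * S1))"
      by (rule eq_matI) auto
    finally show ?thesis .
  qed
  have DS: "D * S1 = \<rho>1 * S1 - 1\<^sub>m d"
    unfolding D_def using c inv by (simp add: minus_mult_distrib_mat[of _ d d _ _ d])
  have t1: "mtrace (D * (D * S1)) = mtrace (\<rho>1 * S1 * \<rho>1) - 1"
  proof -
    have "D * (D * S1) = D * (\<rho>1 * S1) - D" unfolding DS using c Dc
      by (simp add: mult_minus_distrib_mat[of _ d d _ d])
    hence "mtrace (D * (D * S1)) = mtrace (D * (\<rho>1 * S1)) - mtrace D"
      using c Dc by (simp add: mtrace_minus[of _ d])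
    also have "mtrace D = 0" using c tr by (simp add: D_def mtrace_minus[of _ d])
    also have "D * (\<rho>1 * S1) = \<rho>1 * (\<rho>1 * S1) - \<rho>0 * (\<rho>1 * S1)"
      unfolding D_def using c by (simp add: minus_mult_distrib_mat[of _ d d _ _ d])
    also have "mtrace (\<rho>1 * (\<rho>1 * S1) - \<rho>0 * (\<rho>1 * S1)) = mtrace (\<rho>1 * (\<rho>1 * S1)) - mtrace (\<rho>0 * (\<rho>1 * S1))"
      using c by (simp add: mtrace_minus[of _ d])
    also have "mtrace (\<rho>1 * (\<rho>1 * S1)) = mtrace (\<rho>1 * S1 * \<rho>1)"
      using c by (simp add: mtrace_mult_comm[of \<rho>1 d d])
    also have "mtrace (\<rho>0 * (\<rho>1 * S1)) = mtrace (\<rho>1 * S1 * \<rho>0)"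
      using c by (simp add: mtrace_mult_comm[of \<rho>0 d d])
    also have "\<rho>1 * S1 * \<rho>0 = \<rho>1" using c inv by (simp add: assoc_mult_mat[of _ d d _ d _ d])
    finally show ?thesis using tr by simp
  qed
  have A: "mtrace (\<rho>0 * (k \<cdot>\<^sub>m (S1 * D)) * mat_adjoint (k \<cdot>\<^sub>m (S1 * D))) = (k * k) * mtrace (D * (D * S1))"
    unfolding adjL e1 e2 using c Dc by (simp add: mtrace_smult[of _ d])
  have kk: "k * k = complex_of_real (1 / \<delta>\<^sup>2)" by (simp add: k_def power2_eq_square)
  have "mtrace (\<rho>0 * (k \<cdot>\<^sub>m (S1 * D)) * mat_adjoint (k \<cdot>\<^sub>m (S1 * D))) = complex_of_real (1 / \<delta>\<^sup>2) * (mtrace (\<rho>1 * S1 * \<rho>1) - 1)"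
    unfolding A kk t1 ..
  then show ?thesis by (simp only: k_def D_def)
qed


lemma trace_gram_nonneg: fixes Y :: cmat assumes "Y \<in> carrier_mat n n"
  shows "Re (mtrace (mat_adjoint Y * Y)) \<ge> 0"
proof -
  have "mtrace (mat_adjoint Y * Y) = (\<Sum>j<n. \<Sum>i<n. cnj (Y $$ (i,j)) * Y $$ (i,j))"
    using assms by (simp add: mtrace_def mult_entry del: index_mult_mat add: index_mult_mat(2,3))
  hence "Re (mtrace (mat_adjoint Y * Y)) = (\<Sum>j<n. \<Sum>i<n. Re (cnj (Y $$ (i,j)) * Y $$ (i,j)))"
    by (simp only: Re_sum)
  also have "\<dots> \<ge> 0" by (intro sum_nonneg) simp
  finally show ?thesis .
qed

lemma final_limit:
  fixes a :: "nat \<Rightarrow> ereal" and c K :: real and n1 :: nat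
  assumes "\<And>n. n \<ge> n1 \<Longrightarrow> ereal (ln c / real n - ln K) \<le> a n"
  shows "ereal (- ln K) \<le> liminf a"
proof -
  have lim: "(\<lambda>n. ereal (ln c / real n - ln K)) \<longlonglongrightarrow> ereal (0 - ln K)"
    by (intro tendsto_ereal tendsto_diff lim_const_over_n tendsto_const)
  have "liminf (\<lambda>n. ereal (ln c / real n - ln K)) = ereal (0 - ln K)"
    by (rule lim_imp_Liminf[OF trivial_limit_sequentially lim])
  moreover have "liminf (\<lambda>n. ereal (ln c / real n - ln K)) \<le> liminf a"
    by (rule Liminf_mono) (use assms in \<open>auto simp: eventually_sequentially\<close>)
  ultimately show ?thesis by simp
qed

lemma ereal_step:
  fixes m :: ennreal and c K :: real and n :: nat
  assumes n: "n \<ge> 1" and cp: "c > 0"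
    and h: "m = \<top> \<or> (K > 0 \<and> (\<exists>V. m = ennreal V \<and> V \<ge> c / K ^ n))"
  shows "ereal (ln c / real n - ln K) \<le> ereal (1 / real n) * ln_ennreal m"
proof (cases "m = \<top>")
  case True
  then show ?thesis using n by (simp add: ln_ennreal_def)
next
  case False
  then obtain V where K: "K > 0" and m: "m = ennreal V" and V: "V \<ge> c / K ^ n" using h by auto
  have cK: "c / K ^ n > 0" using cp K by simp
  hence Vp: "V > 0" using V by simp
  have lm: "ln_ennreal m = ereal (ln V)" using Vp by (simp add: m ln_ennreal_def)
  have "ln (c / K ^ n) \<le> ln V" using cK Vp V by simp
  hence "ln c - real n * ln K \<le> ln V" using cp K by (simp add: ln_div ln_realpow)
  hence "(ln c - real n * ln K) / real n \<le> ln V / real n" using n by (intro divide_right_mono) auto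
  moreover have "(ln c - real n * ln K) / real n = ln c / real n - ln K" using n by (simp add: field_simps)
  ultimately have "ln c / real n - ln K \<le> ln V / real n" by simp
  then show ?thesis using lm by simp
qed

theorem theorem3:
  fixes d :: nat and \<Theta> :: "real set" and \<rho> :: "real \<Rightarrow> complex mat"
    and g :: "real \<Rightarrow> real" and \<theta> \<delta> :: real
    and M :: "nat \<Rightarrow> real set \<Rightarrow> complex mat"
  assumes model: "\<forall>t \<in> \<Theta>. density_op d (\<rho> t) \<and> pd_op d (\<rho> t)"
    and th: "\<theta> \<in> \<Theta>" and thd: "\<theta> + \<delta> \<in> \<Theta>" and dnz: "\<delta> \<noteq> 0"
    and gap: "\<forall>t \<in> \<Theta>. \<not> (min \<theta> (\<theta> + \<delta>) < t \<and> t < max \<theta> (\<theta> + \<delta>))"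
    and gne: "g \<theta> \<noteq> g (\<theta> + \<delta>)"
    and povm: "\<forall>n \<ge> 1. is_povm (d ^ n) (M n)"
    and bias: "\<exists>n0. \<forall>n \<ge> n0.
        \<bar>bias \<rho> g n (M n) \<theta>\<bar> / \<bar>\<delta>\<bar> \<le> \<bar>diff1 g \<delta> \<theta>\<bar> / 3 \<and>
        \<bar>bias \<rho> g n (M n) (\<theta> + \<delta>)\<bar> / \<bar>\<delta>\<bar> \<le> \<bar>diff1 g \<delta> \<theta>\<bar> / 3"
  shows "liminf (\<lambda>n. ereal (1 / real n) * ln_ennreal (mse \<rho> g n (M n) \<theta>))
           \<ge> ereal (- ln (1 + \<delta>\<^sup>2 * Re (JR1 \<rho> \<theta> \<delta>)))"
proof -
  define \<rho>0 where "\<rho>0 = \<rho> \<theta>"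
  define \<rho>1 where "\<rho>1 = \<rho> (\<theta> + \<delta>)"
  have m0: "psd_op d \<rho>0" "mtrace \<rho>0 = 1" "pd_op d \<rho>0"
    using model th by (auto simp: \<rho>0_def density_op_def)
  have m1: "psd_op d \<rho>1" "mtrace \<rho>1 = 1"
    using model thd by (auto simp: \<rho>1_def density_op_def)
  have c01: "\<rho>0 \<in> carrier_mat d d" "\<rho>1 \<in> carrier_mat d d"
    using m0 m1 by (simp_all add: psd_carrier)
  define S1 where "S1 = minv \<rho>0"
  note mi = pd_minv[OF m0(3), folded S1_def]
  have h0: "mat_adjoint \<rho>0 = \<rho>0" by (rule psd_hermitian[OF m0(1)])
  have h1: "mat_adjoint \<rho>1 = \<rho>1" by (rule psd_hermitian[OF m1(1)])
  have hS: "mat_adjoint S1 = S1" by (rule inv_hermitian[OF c01(1) mi(1) h0 mi(2) mi(3)])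
  obtain B0 where B0: "B0 \<in> carrier_mat d d" "\<rho>0 = mat_adjoint B0 * B0" using psd_decomp[OF m0(1)] by blast
  obtain B1 where B1: "B1 \<in> carrier_mat d d" "\<rho>1 = mat_adjoint B1 * B1" using psd_decomp[OF m1(1)] by blast
  define Bq where "Bq = B0 * (S1 * \<rho>1)"
  have Bqc: "Bq \<in> carrier_mat d d" using B0 mi c01 by (simp add: Bq_def)
  have gq: "\<rho>1 * S1 * \<rho>1 = mat_adjoint Bq * Bq"
  proof -
    have a1: "mat_adjoint Bq = (\<rho>1 * S1) * mat_adjoint B0"
      unfolding Bq_def using B0 mi c01 h1 hS
      by (simp add: adj_mult[of B0 d d _ d] adj_mult[of S1 d d \<rho>1 d])
    have "mat_adjoint Bq * Bq = ((\<rho>1 * S1) * mat_adjoint B0) * (B0 * (S1 * \<rho>1))"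
      by (subst a1) (simp only: Bq_def)
    also have "\<dots> = (\<rho>1 * S1) * ((mat_adjoint B0 * B0) * (S1 * \<rho>1))"
      using B0(1) mi c01 by (simp add: assoc_mult_mat[of _ d d _ d _ d])
    also have "\<dots> = (\<rho>1 * S1) * (\<rho>0 * (S1 * \<rho>1))" using B0(2) by simp
    also have "\<rho>0 * (S1 * \<rho>1) = \<rho>1"
    proof -
      have "(\<rho>0 * S1) * \<rho>1 = \<rho>0 * (S1 * \<rho>1)" by (rule assoc_mult_mat) (use mi c01 in auto)
      moreover have "(\<rho>0 * S1) * \<rho>1 = \<rho>1" using mi(2) c01(2) by simp
      ultimately show ?thesis by simp
    qed
    finally show ?thesis by simp
  qed
  define Kc where "Kc = mtrace (\<rho>1 * S1 * \<rho>1)"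
  define K where "K = Re Kc"
  have KcR: "Kc = of_real K"
  proof -
    have "mat_adjoint (\<rho>1 * S1 * \<rho>1) = \<rho>1 * S1 * \<rho>1"
      unfolding gq using Bqc by (simp add: adj_mult[of _ d d _ d])
    hence "cnj Kc = Kc" unfolding Kc_def using mtrace_adj[of "\<rho>1 * S1 * \<rho>1" d] mi c01 by simp
    then show ?thesis by (simp add: K_def complex_eq_iff)
  qed
  have K0: "K \<ge> 0" unfolding K_def Kc_def gq by (rule trace_gram_nonneg[OF Bqc])
  have JK: "1 + \<delta>\<^sup>2 * Re (JR1 \<rho> \<theta> \<delta>) = K"
  proof -
    have "JR1 \<rho> \<theta> \<delta> = complex_of_real (1 / \<delta>\<^sup>2) * (Kc - 1)"
      unfolding JR1_def LR1_def \<rho>0_def[symmetric] \<rho>1_def[symmetric] S1_def[symmetric] Kc_def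
      by (rule J_identity[OF c01 mi(1) mi(3) mi(2) hS h1 h0 m0(2) m1(2) dnz])
    then show ?thesis using dnz by (simp add: KcR)
  qed
  obtain n0 where n0: "\<forall>n \<ge> n0. \<bar>bias \<rho> g n (M n) \<theta>\<bar> / \<bar>\<delta>\<bar> \<le> \<bar>diff1 g \<delta> \<theta>\<bar> / 3 \<and>
        \<bar>bias \<rho> g n (M n) (\<theta> + \<delta>)\<bar> / \<bar>\<delta>\<bar> \<le> \<bar>diff1 g \<delta> \<theta>\<bar> / 3" using bias by blast
  define c where "c = 3 / 4 * (\<bar>g (\<theta> + \<delta>) - g \<theta>\<bar> / 3)\<^sup>2"
  have cp: "c > 0" using gne by (simp add: c_def)
  have dp: "\<bar>\<delta>\<bar> > 0" using dnz by simp
  have bb: "\<bar>b\<bar> \<le> \<bar>g (\<theta> + \<delta>) - g \<theta>\<bar> / 3" if "\<bar>b\<bar> / \<bar>\<delta>\<bar> \<le> \<bar>diff1 g \<delta> \<theta>\<bar> / 3" for b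
  proof -
    have "\<bar>diff1 g \<delta> \<theta>\<bar> / 3 = (\<bar>g (\<theta> + \<delta>) - g \<theta>\<bar> / 3) / \<bar>\<delta>\<bar>" by (simp add: diff1_def abs_divide)
    with that have "\<bar>b\<bar> / \<bar>\<delta>\<bar> \<le> (\<bar>g (\<theta> + \<delta>) - g \<theta>\<bar> / 3) / \<bar>\<delta>\<bar>" by simp
    then show ?thesis using divide_le_cancel[of "\<bar>b\<bar>" "\<bar>\<delta>\<bar>" "\<bar>g (\<theta> + \<delta>) - g \<theta>\<bar> / 3"] dp by auto
  qed
  have step: "ereal (ln c / real n - ln K) \<le> ereal (1 / real n) * ln_ennreal (mse \<rho> g n (M n) \<theta>)"
    if n: "n \<ge> max n0 1" for n
  proof -
    have n1: "n \<ge> 1" and nn0: "n \<ge> n0" using n by auto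
    have b0: "\<bar>\<integral>\<gamma>. (\<gamma> - g \<theta>) \<partial>outcome_dist (tensor_pow \<rho>0 n) (M n)\<bar> \<le> \<bar>g (\<theta> + \<delta>) - g \<theta>\<bar> / 3"
      using bb n0 nn0 by (simp add: bias_def \<rho>0_def)
    have b1: "\<bar>\<integral>\<gamma>. (\<gamma> - g (\<theta> + \<delta>)) \<partial>outcome_dist (tensor_pow \<rho>1 n) (M n)\<bar> \<le> \<bar>g (\<theta> + \<delta>) - g \<theta>\<bar> / 3"
      using bb n0 nn0 by (simp add: bias_def \<rho>1_def)
    have pn: "is_povm (d ^ n) (M n)" using povm n1 by simp
    have tr3: "mtrace (\<rho>1 * S1 * \<rho>1) = of_real K" using KcR by (simp add: Kc_def)
    have "(\<integral>\<^sup>+\<gamma>. ennreal ((\<gamma> - g \<theta>)\<^sup>2) \<partial>outcome_dist (tensor_pow \<rho>0 n) (M n)) = \<top> \<or>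
      (K > 0 \<and> (\<exists>V. (\<integral>\<^sup>+\<gamma>. ennreal ((\<gamma> - g \<theta>)\<^sup>2) \<partial>outcome_dist (tensor_pow \<rho>0 n) (M n)) = ennreal V
        \<and> V \<ge> 3 / 4 * (\<bar>g (\<theta> + \<delta>) - g \<theta>\<bar> / 3)\<^sup>2 / K ^ n))"
      by (rule per_n[OF c01 mi(1) B0(1) B1(1) Bqc B0(2) B1(2) gq mi(3) mi(2) hS h1 m0(2) m1(2) tr3 K0 pn n1 b0 b1 gne])
    hence "mse \<rho> g n (M n) \<theta> = \<top> \<or> (K > 0 \<and> (\<exists>V. mse \<rho> g n (M n) \<theta> = ennreal V \<and> V \<ge> c / K ^ n))"
      by (simp add: mse_def \<rho>0_def c_def)
    then show ?thesis by (rule ereal_step[OF n1 cp])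
  qed
  have "ereal (- ln K) \<le> liminf (\<lambda>n. ereal (1 / real n) * ln_ennreal (mse \<rho> g n (M n) \<theta>))"
    by (rule final_limit[of "max n0 1"]) (rule step)
  then show ?thesis using JK by simp
qed


end
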